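(* The function \[ F_0(k,a,b,c,d,e) = (-1)^{d+e}\,\frac{\Gamma(a+k)\Gamma(b+k)\Gamma(c+k)}{\Gamma(d+k)\Gamma(e+k)\Gamma(a+b+c-d-e+2+k)} \] \[ \times\frac{\Gamma(a+b-d-e+2)\,\Gamma(a+c-d-e+2)\,\Gamma(b+c-d-e+2)}{\Gamma(a-d+1)\Gamma(a-e+1)\Gamma(b-d+1)\Gamma(b-e+1)\Gamma(c-d+1)\Gamma(c-e+1)} \] is a WZ seed in the variables $a,b,c,d,e$.
   Context: A term $F(n_1,\dots,n_r)$ is hypergeometric in $n_1,\dots,n_r$ if each ratio $F(\dots,n_i+1,\dots)/F(\dots,n_i,\dots)$ is a rational function of $n_1,\dots,n_r$. Write $\Delta_n f(n)=f(n+1)-f(n)$. Two hypergeometric terms $F(n,k),G(n,k)$ form a WZ pair, and $G$ is called a WZ mate of $F$, if $\Delta_n F(n,k)=\Delta_k G(n,k)$. A hypergeometric term $F_0(k,a,b,\dots)$ (hypergeometric in $k,a,b,\dots$) is a WZ seed in the variables $a,b,\dots$ if for all integers $K,A,B,\dots$ and all complex $k_0$ and all values of the parameters $a,b,\dots$, the term $F(n,k)=F_0(Kn+k_0+k,\,An+a,\,Bn+b,\dots)$ has a WZ mate $G(n,k)$ (a hypergeometric term). Factors such as $(-1)^x$ or $z^x$ with non-integer exponent $x$ are understood as hypergeometric factors satisfying $(-1)^{x+1}=-(-1)^x$, $z^{x+1}=z\cdot z^x$ (e.g. defined via a fixed branch of the exponential). *)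

theory Defs
  imports "HOL-Analysis.Analysis" "HOL-Computational_Algebra.Polynomial"
begin

text \<open>Bivariate polynomials over the complex numbers are represented as
  \<open>complex poly poly\<close>; the outer variable is \<open>n\<close>, the inner one \<open>k\<close>.\<close>
definition biv :: "complex poly poly \<Rightarrow> int \<Rightarrow> int \<Rightarrow> complex" where
  "biv P n k = poly (poly P [:of_int n:]) (of_int k)"

definition hypergeometric2 :: "(int \<Rightarrow> int \<Rightarrow> complex) \<Rightarrow> bool" where
  "hypergeometric2 F \<longleftrightarrow>
     (\<exists>p q. q \<noteq> 0 \<and> (\<forall>n k. biv q n k * F (n + 1) k = biv p n k * F n k)) \<and>
     (\<exists>p q. q \<noteq> 0 \<and> (\<forall>n k. biv q n k * F n (k + 1) = biv p n k * F n k))"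

definition wz_mate :: "(int \<Rightarrow> int \<Rightarrow> complex) \<Rightarrow> (int \<Rightarrow> int \<Rightarrow> complex) \<Rightarrow> bool" where
  "wz_mate F G \<longleftrightarrow> hypergeometric2 G \<and>
     (\<forall>n k. F (n + 1) k - F n k = G n (k + 1) - G n k)"

text \<open>The seed is given as a partial function
  (\<open>None\<close> where some Gamma factor of the numerator hits a pole); the WZ-seed
  property is required for every specialisation that yields a term defined on
  all of \<open>\<int>\<^sup>2\<close>.\<close>
definition wz_seed5 ::
  "(complex \<Rightarrow> complex \<Rightarrow> complex \<Rightarrow> complex \<Rightarrow> complex \<Rightarrow> complex \<Rightarrow> complex option) \<Rightarrow> bool" where
  "wz_seed5 F0 \<longleftrightarrow>
     (\<forall>(K::int) (A::int) (B::int) (C::int) (D::int) (E::int) (k0::complex) a b c d e.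
        let F = (\<lambda>(n::int) (k::int). F0 (of_int K * of_int n + k0 + of_int k)
                   (of_int A * of_int n + a) (of_int B * of_int n + b) (of_int C * of_int n + c)
                   (of_int D * of_int n + d) (of_int E * of_int n + e))
        in (\<forall>n k. F n k \<noteq> None) \<longrightarrow> (\<exists>G. wz_mate (\<lambda>n k. the (F n k)) G))"

text \<open>The hypergeometric factor \<open>(-1)^x\<close> for complex \<open>x\<close>, via the fixed branch
  \<open>exp(i\<pi>x)\<close>; it satisfies \<open>(-1)^(x+1) = -(-1)^x\<close>.\<close>
definition m1pow :: "complex \<Rightarrow> complex" where
  "m1pow x = exp (complex_of_real pi * \<i> * x)"

text \<open>The seed \<open>F\<^sub>0(k,a,b,c,d,e)\<close>.  Reciprocal Gamma factors use the entire
  function \<open>rGamma\<close>; the term is undefined when a numerator Gamma has a pole.\<close>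
definition seedF0 :: "complex \<Rightarrow> complex \<Rightarrow> complex \<Rightarrow> complex \<Rightarrow> complex \<Rightarrow> complex \<Rightarrow> complex option" where
  "seedF0 k a b c d e =
     (if {a + k, b + k, c + k, a + b - d - e + 2, a + c - d - e + 2, b + c - d - e + 2}
           \<inter> \<int>\<^sub>\<le>\<^sub>0 = {}
      then Some (m1pow (d + e)
        * Gamma (a + k) * Gamma (b + k) * Gamma (c + k)
        * rGamma (d + k) * rGamma (e + k) * rGamma (a + b + c - d - e + 2 + k)
        * Gamma (a + b - d - e + 2) * Gamma (a + c - d - e + 2) * Gamma (b + c - d - e + 2)
        * rGamma (a - d + 1) * rGamma (a - e + 1) * rGamma (b - d + 1)
        * rGamma (b - e + 1) * rGamma (c - d + 1) * rGamma (c - e + 1))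
      else None)"

end

theory Submission
  imports Defs
begin

section \<open>Polynomial functions on Z^2\<close>

inductive pf :: "(int \<Rightarrow> int \<Rightarrow> complex) \<Rightarrow> bool" where
  pf_const: "pf (\<lambda>n k. c)"
| pf_n: "pf (\<lambda>n k. of_int n)"
| pf_k: "pf (\<lambda>n k. of_int k)"
| pf_add: "pf f \<Longrightarrow> pf g \<Longrightarrow> pf (\<lambda>n k. f n k + g n k)"
| pf_mult: "pf f \<Longrightarrow> pf g \<Longrightarrow> pf (\<lambda>n k. f n k * g n k)"

lemma biv_add: "biv (P + Q) n k = biv P n k + biv Q n k"
  by (simp add: biv_def)
lemma biv_mult: "biv (P * Q) n k = biv P n k * biv Q n k"
  by (simp add: biv_def)

lemma pf_biv: "pf f \<Longrightarrow> \<exists>P. \<forall>n k. f n k = biv P n k"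
proof (induction rule: pf.induct)
  case (pf_const c)
  show ?case by (rule exI[of _ "[:[:c:]:]"]) (simp add: biv_def)
next
  case pf_n
  show ?case by (rule exI[of _ "[:0, 1:]"]) (simp add: biv_def)
next
  case pf_k
  show ?case by (rule exI[of _ "[:[:0, 1:]:]"]) (simp add: biv_def)
next
  case (pf_add f g)
  then obtain P Q where "\<forall>n k. f n k = biv P n k" "\<forall>n k. g n k = biv Q n k" by blast
  then show ?case by (intro exI[of _ "P + Q"]) (simp add: biv_add)
next
  case (pf_mult f g)
  then obtain P Q where "\<forall>n k. f n k = biv P n k" "\<forall>n k. g n k = biv Q n k" by blast
  then show ?case by (intro exI[of _ "P * Q"]) (simp add: biv_mult)
qed

lemma pf_shn: "pf f \<Longrightarrow> pf (\<lambda>n k. f (n + 1) k)"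
proof (induction rule: pf.induct)
  case (pf_const c) show ?case by (rule pf.pf_const)
next
  case pf_n
  have "pf (\<lambda>n k. of_int n + (\<lambda>n k. 1) n k)" by (intro pf_add pf.pf_n pf.pf_const)
  then show ?case by simp
next
  case pf_k show ?case by (rule pf.pf_k)
next
  case (pf_add f g) show ?case using pf.pf_add[OF pf_add.IH] by simp
next
  case (pf_mult f g) show ?case using pf.pf_mult[OF pf_mult.IH] by simp
qed

lemma pf_shk: "pf f \<Longrightarrow> pf (\<lambda>n k. f n (k + 1))"
proof (induction rule: pf.induct)
  case (pf_const c) show ?case by (rule pf.pf_const)
next
  case pf_k
  have "pf (\<lambda>n k. of_int k + (\<lambda>n k. 1) n k)" by (intro pf_add pf.pf_k pf.pf_const)
  then show ?case by simp
next
  case pf_n show ?case by (rule pf.pf_n)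
next
  case (pf_add f g) show ?case using pf.pf_add[OF pf_add.IH] by simp
next
  case (pf_mult f g) show ?case using pf.pf_mult[OF pf_mult.IH] by simp
qed

lemma pf_tr: "pf f \<Longrightarrow> pf (\<lambda>n k. f k n)"
proof (induction rule: pf.induct)
  case (pf_const c) show ?case by (rule pf.pf_const)
next
  case pf_k show ?case by (rule pf.pf_n)
next
  case pf_n show ?case by (rule pf.pf_k)
next
  case (pf_add f g) show ?case using pf.pf_add[OF pf_add.IH] by simp
next
  case (pf_mult f g) show ?case using pf.pf_mult[OF pf_mult.IH] by simp
qed

lemma pf_affine: "pf (\<lambda>n k. of_int u * of_int n + of_int v * of_int k + c)"
  by (intro pf.intros)

lemma pf_poch: "pf y \<Longrightarrow> pf (\<lambda>n k. pochhammer (y n k) m)"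
proof (induction m)
  case 0 then show ?case by (simp add: pf_const)
next
  case (Suc m)
  then have "pf (\<lambda>n k. pochhammer (y n k) m * (y n k + (\<lambda>n k. of_nat m) n k))"
    by (intro pf.intros)
  then show ?case by (simp add: pochhammer_rec' mult.commute)
qed

lemma pf_neg: "pf f \<Longrightarrow> pf (\<lambda>n k. - f n k)"
proof -
  assume "pf f"
  then have "pf (\<lambda>n k. (\<lambda>n k. -1) n k * f n k)" by (intro pf.intros)
  then show ?thesis by simp
qed

lemma pf_diff: "pf f \<Longrightarrow> pf g \<Longrightarrow> pf (\<lambda>n k. f n k - g n k)"
  using pf_add[OF _ pf_neg[of g], of f] by simp

section \<open>Hypergeometric in each direction\<close>

definition hypN :: "(int \<Rightarrow> int \<Rightarrow> complex) \<Rightarrow> bool" where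
  "hypN G \<longleftrightarrow> (\<exists>p q. q \<noteq> 0 \<and> (\<forall>n k. biv q n k * G (n + 1) k = biv p n k * G n k))"
definition hypK :: "(int \<Rightarrow> int \<Rightarrow> complex) \<Rightarrow> bool" where
  "hypK G \<longleftrightarrow> (\<exists>p q. q \<noteq> 0 \<and> (\<forall>n k. biv q n k * G n (k + 1) = biv p n k * G n k))"

lemma hyp2I: "hypN G \<Longrightarrow> hypK G \<Longrightarrow> hypergeometric2 G"
  unfolding hypN_def hypK_def hypergeometric2_def by blast

definition hypNpt :: "(int \<Rightarrow> int \<Rightarrow> complex) \<Rightarrow> bool" where
  "hypNpt G \<longleftrightarrow> (\<exists>p q. pf p \<and> pf q \<and> (\<exists>n k. q n k \<noteq> 0) \<and>
      (\<forall>n k. q n k * G (n + 1) k = p n k * G n k))"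

lemma hypNpt_hypN: "hypNpt G \<Longrightarrow> hypN G"
proof -
  assume "hypNpt G"
  then obtain p q n0 k0 where pq: "pf p" "pf q" "q n0 k0 \<noteq> 0"
    "\<forall>n k. q n k * G (n + 1) k = p n k * G n k" unfolding hypNpt_def by blast
  obtain P where P: "\<forall>n k. p n k = biv P n k" using pf_biv[OF pq(1)] by blast
  obtain Q where Q: "\<forall>n k. q n k = biv Q n k" using pf_biv[OF pq(2)] by blast
  have "Q \<noteq> 0" using pq(3) Q by (auto simp: biv_def)
  then show ?thesis unfolding hypN_def using pq(4) P Q by (intro exI[of _ P] exI[of _ Q]) auto
qed

lemma hypNpt_hypK: "hypNpt (\<lambda>n k. G k n) \<Longrightarrow> hypK G"
proof -
  assume "hypNpt (\<lambda>n k. G k n)"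
  then obtain p q n0 k0 where pq: "pf p" "pf q" "q n0 k0 \<noteq> 0"
    "\<forall>n k. q n k * G k (n + 1) = p n k * G k n" unfolding hypNpt_def by blast
  obtain P where P: "\<forall>n k. p k n = biv P n k" using pf_biv[OF pf_tr[OF pq(1)]] by blast
  obtain Q where Q: "\<forall>n k. q k n = biv Q n k" using pf_biv[OF pf_tr[OF pq(2)]] by blast
  have "biv Q k0 n0 \<noteq> 0" using pq(3) Q by metis
  then have "Q \<noteq> 0" by (auto simp: biv_def)
  then show ?thesis unfolding hypK_def using pq(4) P Q by (intro exI[of _ P] exI[of _ Q]) auto
qed

lemma hypN_mult: "hypN f \<Longrightarrow> hypN g \<Longrightarrow> hypN (\<lambda>n k. f n k * g n k)"
proof -
  assume "hypN f" "hypN g"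
  then obtain p q p' q' where h: "q \<noteq> 0" "\<forall>n k. biv q n k * f (n + 1) k = biv p n k * f n k"
    "q' \<noteq> 0" "\<forall>n k. biv q' n k * g (n + 1) k = biv p' n k * g n k" unfolding hypN_def by blast
  have "q * q' \<noteq> 0" using h by simp
  moreover have "\<forall>n k. biv (q * q') n k * (f (n + 1) k * g (n + 1) k) = biv (p * p') n k * (f n k * g n k)"
  proof (intro allI)
    fix n k
    have "biv (q * q') n k * (f (n + 1) k * g (n + 1) k) = (biv q n k * f (n + 1) k) * (biv q' n k * g (n + 1) k)"
      by (simp add: biv_mult)
    also have "\<dots> = biv (p * p') n k * (f n k * g n k)" using h by (simp add: biv_mult)
    finally show "biv (q * q') n k * (f (n + 1) k * g (n + 1) k) = biv (p * p') n k * (f n k * g n k)" .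
  qed
  ultimately show ?thesis unfolding hypN_def by blast
qed

lemma hypK_mult: "hypK f \<Longrightarrow> hypK g \<Longrightarrow> hypK (\<lambda>n k. f n k * g n k)"
proof -
  assume "hypK f" "hypK g"
  then obtain p q p' q' where h: "q \<noteq> 0" "\<forall>n k. biv q n k * f n (k + 1) = biv p n k * f n k"
    "q' \<noteq> 0" "\<forall>n k. biv q' n k * g n (k + 1) = biv p' n k * g n k" unfolding hypK_def by blast
  have "q * q' \<noteq> 0" using h by simp
  moreover have "\<forall>n k. biv (q * q') n k * (f n (k + 1) * g n (k + 1)) = biv (p * p') n k * (f n k * g n k)"
  proof (intro allI)
    fix n k
    have "biv (q * q') n k * (f n (k + 1) * g n (k + 1)) = (biv q n k * f n (k + 1)) * (biv q' n k * g n (k + 1))"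
      by (simp add: biv_mult)
    also have "\<dots> = biv (p * p') n k * (f n k * g n k)" using h by (simp add: biv_mult)
    finally show "biv (q * q') n k * (f n (k + 1) * g n (k + 1)) = biv (p * p') n k * (f n k * g n k)" .
  qed
  ultimately show ?thesis unfolding hypK_def by blast
qed

definition sim :: "(int \<Rightarrow> int \<Rightarrow> complex) \<Rightarrow> (int \<Rightarrow> int \<Rightarrow> complex) \<Rightarrow> bool" where
  "sim g B \<longleftrightarrow> (\<exists>f. pf f \<and> (\<forall>n k. g n k = f n k * B n k))"

lemma hypN_sim: "hypN B \<Longrightarrow> sim g B \<Longrightarrow> hypN g"
proof -
  assume hB: "hypN B" and "sim g B"
  then obtain f where f: "pf f" "\<forall>n k. g n k = f n k * B n k" unfolding sim_def by blast
  show ?thesis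
  proof (cases "\<forall>n k. f n k = 0")
    case True
    then show ?thesis unfolding hypN_def using f
      by (intro exI[of _ 0] exI[of _ 1]) (simp add: biv_def)
  next
    case False
    then obtain n0 k0 where nz: "f n0 k0 \<noteq> 0" by blast
    obtain F where F: "\<forall>n k. f n k = biv F n k" using pf_biv[OF f(1)] by blast
    obtain F1 where F1: "\<forall>n k. f (n + 1) k = biv F1 n k" using pf_biv[OF pf_shn[OF f(1)]] by blast
    have "F \<noteq> 0" using nz F by (auto simp: biv_def)
    obtain p q where pq: "q \<noteq> 0" "\<forall>n k. biv q n k * B (n + 1) k = biv p n k * B n k"
      using hB unfolding hypN_def by blast
    have "F * q \<noteq> 0" using \<open>F \<noteq> 0\<close> pq(1) by simp
    moreover have "\<forall>n k. biv (F * q) n k * g (n + 1) k = biv (F1 * p) n k * g n k"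
    proof (intro allI)
      fix n k
      have "biv (F * q) n k * g (n + 1) k = f n k * f (n+1) k * (biv q n k * B (n + 1) k)"
        using f F by (simp add: biv_mult)
      also have "\<dots> = f n k * f (n+1) k * (biv p n k * B n k)" using pq(2) by simp
      also have "\<dots> = biv (F1 * p) n k * g n k" using f F1 by (simp add: biv_mult)
      finally show "biv (F * q) n k * g (n + 1) k = biv (F1 * p) n k * g n k" .
    qed
    ultimately show ?thesis unfolding hypN_def by blast
  qed
qed

lemma hypK_sim: "hypK B \<Longrightarrow> sim g B \<Longrightarrow> hypK g"
proof -
  assume hB: "hypK B" and "sim g B"
  then obtain f where f: "pf f" "\<forall>n k. g n k = f n k * B n k" unfolding sim_def by blast
  show ?thesis
  proof (cases "\<forall>n k. f n k = 0")
    case True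
    then show ?thesis unfolding hypK_def using f
      by (intro exI[of _ 0] exI[of _ 1]) (simp add: biv_def)
  next
    case False
    then obtain n0 k0 where nz: "f n0 k0 \<noteq> 0" by blast
    obtain F where F: "\<forall>n k. f n k = biv F n k" using pf_biv[OF f(1)] by blast
    obtain F1 where F1: "\<forall>n k. f n (k + 1) = biv F1 n k" using pf_biv[OF pf_shk[OF f(1)]] by blast
    have "F \<noteq> 0" using nz F by (auto simp: biv_def)
    obtain p q where pq: "q \<noteq> 0" "\<forall>n k. biv q n k * B n (k + 1) = biv p n k * B n k"
      using hB unfolding hypK_def by blast
    have "F * q \<noteq> 0" using \<open>F \<noteq> 0\<close> pq(1) by simp
    moreover have "\<forall>n k. biv (F * q) n k * g n (k + 1) = biv (F1 * p) n k * g n k"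
    proof (intro allI)
      fix n k
      have "biv (F * q) n k * g n (k + 1) = f n k * f n (k + 1) * (biv q n k * B n (k + 1))"
        using f F by (simp add: biv_mult)
      also have "\<dots> = f n k * f n (k + 1) * (biv p n k * B n k)" using pq(2) by simp
      also have "\<dots> = biv (F1 * p) n k * g n k" using f F1 by (simp add: biv_mult)
      finally show "biv (F * q) n k * g n (k + 1) = biv (F1 * p) n k * g n k" .
    qed
    ultimately show ?thesis unfolding hypK_def by blast
  qed
qed

lemma sim_add: "sim f B \<Longrightarrow> sim g B \<Longrightarrow> sim (\<lambda>n k. f n k + g n k) B"
proof -
  assume "sim f B" "sim g B"
  then obtain u v where "pf u" "\<forall>n k. f n k = u n k * B n k" "pf v" "\<forall>n k. g n k = v n k * B n k"
    unfolding sim_def by blast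
  then show ?thesis unfolding sim_def
    by (intro exI[of _ "\<lambda>n k. u n k + v n k"]) (auto intro: pf_add simp: algebra_simps)
qed

lemma sim_neg: "sim f B \<Longrightarrow> sim (\<lambda>n k. - f n k) B"
proof -
  assume "sim f B"
  then obtain u where "pf u" "\<forall>n k. f n k = u n k * B n k" unfolding sim_def by blast
  then show ?thesis unfolding sim_def
    by (intro exI[of _ "\<lambda>n k. - u n k"]) (auto intro: pf_neg)
qed

lemma sim_zero: "sim (\<lambda>n k. 0) B"
  unfolding sim_def by (intro exI[of _ "\<lambda>n k. 0"]) (auto intro: pf_const)

lemma sim_pf_mult: "pf h \<Longrightarrow> sim f B \<Longrightarrow> sim (\<lambda>n k. h n k * f n k) B"
proof -
  assume "pf h" "sim f B"
  then obtain u where "pf u" "\<forall>n k. f n k = u n k * B n k" unfolding sim_def by blast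
  then show ?thesis unfolding sim_def using \<open>pf h\<close>
    by (intro exI[of _ "\<lambda>n k. h n k * u n k"]) (auto intro: pf_mult)
qed

lemma sim_sum: "(\<And>i. i \<in> S \<Longrightarrow> sim (f i) B) \<Longrightarrow> sim (\<lambda>n k. \<Sum>i\<in>S. f i n k) B"
proof (induction S rule: infinite_finite_induct)
  case (infinite S) then show ?case by (simp add: sim_zero)
next
  case empty then show ?case by (simp add: sim_zero)
next
  case (insert x F)
  then show ?case by (simp add: sim_add)
qed

definition aff :: "int \<Rightarrow> int \<Rightarrow> complex \<Rightarrow> int \<Rightarrow> int \<Rightarrow> complex" where
  "aff u v c n k = of_int u * of_int n + of_int v * of_int k + c"

lemma aff_shift: "aff u v c (n + 1) k = aff u v c n k + of_int u"
  by (simp add: aff_def algebra_simps)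
lemma aff_tr: "aff u v c k n = aff v u c n k"
  by (simp add: aff_def algebra_simps)
lemma pf_aff: "pf (aff u v c)"
proof -
  have "pf (\<lambda>n k. of_int u * of_int n + of_int v * of_int k + c)" by (rule pf_affine)
  then show ?thesis by (simp add: aff_def[abs_def])
qed

lemma nonpos_Ints_shift:
  assumes "(z::complex) \<notin> \<int>\<^sub>\<le>\<^sub>0" "j \<ge> 0" shows "z + of_int j \<notin> \<int>\<^sub>\<le>\<^sub>0"
proof
  assume "z + of_int j \<in> \<int>\<^sub>\<le>\<^sub>0"
  then obtain m where m: "z + of_int j = of_int m" "m \<le> 0" by (auto elim!: nonpos_Ints_cases)
  then have "z = of_int (m - j)" by (simp add: algebra_simps)
  moreover have "m - j \<le> 0" using m assms by simp
  ultimately have "z \<in> \<int>\<^sub>\<le>\<^sub>0" unfolding nonpos_Ints_def by blast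
  then show False using assms(1) by simp
qed

lemma poch_nz: "(z::complex) \<notin> \<int>\<^sub>\<le>\<^sub>0 \<Longrightarrow> pochhammer z m \<noteq> 0"
  by (auto simp: pochhammer_eq_0_iff)

lemma Gamma_poch: "(z::complex) \<notin> \<int>\<^sub>\<le>\<^sub>0 \<Longrightarrow> Gamma (z + of_nat m) = pochhammer z m * Gamma z"
  using pochhammer_Gamma[of z m] by (simp add: Gamma_eq_zero_iff field_simps)

lemma rGamma_poch: "rGamma (z::complex) = pochhammer z m * rGamma (z + of_nat m)"
  by (rule pochhammer_rGamma)

lemma hypNptI:
  assumes "pf p" "pf q" "\<exists>n0 k0. q n0 k0 \<noteq> 0" "\<And>n k. q n k * G (n + 1) k = p n k * G n k"
  shows "hypNpt G"
  unfolding hypNpt_def using assms by blast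

lemma hypNpt_Gamma:
  assumes h: "\<forall>n k. aff u v c n k \<notin> \<int>\<^sub>\<le>\<^sub>0"
  shows "hypNpt (\<lambda>n k. Gamma (aff u v c n k))"
proof (cases "u \<ge> 0")
  case True
  define m where "m = nat u"
  have u: "of_int u = (of_nat m :: complex)" using True by (simp add: m_def)
  show ?thesis
  proof (rule hypNptI[where q = "\<lambda>n k. 1"])
    show "pf (\<lambda>n k. pochhammer (aff u v c n k) m)" by (rule pf_poch[OF pf_aff])
    show "pf (\<lambda>n k. 1)" by (rule pf_const)
    fix n k
    show "1 * Gamma (aff u v c (n + 1) k) = pochhammer (aff u v c n k) m * Gamma (aff u v c n k)"
      using h by (simp add: aff_shift u Gamma_poch)
  qed simp
next
  case False
  define m where "m = nat (- u)"
  have u: "aff u v c n k = aff u v c (n + 1) k + of_nat m" for n k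
    using False by (simp add: m_def aff_shift)
  show ?thesis
  proof (rule hypNptI[where p = "\<lambda>n k. 1"])
    show "pf (\<lambda>n k. pochhammer (aff u v c (n + 1) k) m)" by (rule pf_poch[OF pf_shn[OF pf_aff]])
    show "pf (\<lambda>n k. 1)" by (rule pf_const)
    show "\<exists>n0 k0. pochhammer (aff u v c (n0 + 1) k0) m \<noteq> 0" using h poch_nz by blast
    fix n k
    show "pochhammer (aff u v c (n + 1) k) m * Gamma (aff u v c (n + 1) k) = 1 * Gamma (aff u v c n k)"
      using h Gamma_poch[of "aff u v c (n + 1) k" m] u[of n k] by simp
  qed
qed

lemma exists_re_pos: "u > 0 \<Longrightarrow> \<exists>n. Re (aff u v c n 0) > 0"
proof -
  assume u: "u > 0"
  define n where "n = \<lceil>\<bar>Re c\<bar>\<rceil> + 1"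
  have re: "Re (aff u v c n 0) = real_of_int u * real_of_int n + Re c" by (simp add: aff_def)
  have n1: "real_of_int n > \<bar>Re c\<bar>" unfolding n_def by linarith
  then have "real_of_int n \<ge> 0" by linarith
  moreover have "real_of_int u \<ge> 1" using u by simp
  ultimately have "real_of_int u * real_of_int n \<ge> 1 * real_of_int n"
    by (intro mult_right_mono) auto
  then have "Re (aff u v c n 0) > 0" using re n1 by linarith
  then show ?thesis by blast
qed

lemma re_pos_nonpos: "Re (z::complex) > 0 \<Longrightarrow> z \<notin> \<int>\<^sub>\<le>\<^sub>0"
proof
  assume "Re z > 0" "z \<in> \<int>\<^sub>\<le>\<^sub>0"
  then obtain m where "z = of_int m" "m \<le> 0" by (auto elim!: nonpos_Ints_cases)
  then show False using \<open>Re z > 0\<close> by simp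
qed

lemma hypNpt_rGamma: "hypNpt (\<lambda>n k. rGamma (aff u v c n k))"
proof (cases "u \<ge> 0")
  case True
  define m where "m = nat u"
  have u: "of_int u = (of_nat m :: complex)" using True by (simp add: m_def)
  have nz: "\<exists>n0 k0. pochhammer (aff u v c n0 k0) m \<noteq> 0"
  proof (cases "m = 0")
    case True then show ?thesis by simp
  next
    case False
    then have "u > 0" using m_def by simp
    then obtain n where "Re (aff u v c n 0) > 0" using exists_re_pos by blast
    then have "aff u v c n 0 \<notin> \<int>\<^sub>\<le>\<^sub>0" by (rule re_pos_nonpos)
    then show ?thesis using poch_nz by blast
  qed
  show ?thesis
  proof (rule hypNptI[where p = "\<lambda>n k. 1", OF _ _ nz])
    show "pf (\<lambda>n k. pochhammer (aff u v c n k) m)" by (rule pf_poch[OF pf_aff])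
    show "pf (\<lambda>n k. 1)" by (rule pf_const)
    fix n k
    show "pochhammer (aff u v c n k) m * rGamma (aff u v c (n + 1) k) = 1 * rGamma (aff u v c n k)"
      using rGamma_poch[of "aff u v c n k" m] by (simp add: aff_shift u)
  qed
next
  case False
  define m where "m = nat (- u)"
  have u: "aff u v c n k = aff u v c (n + 1) k + of_nat m" for n k
    using False by (simp add: m_def aff_shift)
  show ?thesis
  proof (rule hypNptI[where q = "\<lambda>n k. 1"])
    show "pf (\<lambda>n k. pochhammer (aff u v c (n + 1) k) m)" by (rule pf_poch[OF pf_shn[OF pf_aff]])
    show "pf (\<lambda>n k. 1)" by (rule pf_const)
    fix n k
    show "1 * rGamma (aff u v c (n + 1) k) = pochhammer (aff u v c (n + 1) k) m * rGamma (aff u v c n k)"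
      using rGamma_poch[of "aff u v c (n + 1) k" m] u[of n k] by simp
  qed simp
qed

lemma m1pow_add: "m1pow (x + y) = m1pow x * m1pow y"
  by (simp add: m1pow_def algebra_simps exp_add)

lemma m1pow_one: "m1pow 1 = -1"
  by (simp add: m1pow_def)

lemma hypNpt_m1pow: "hypNpt (\<lambda>n k. m1pow (aff u v c n k))"
proof (rule hypNptI[where q = "\<lambda>n k. 1"])
  show "pf (\<lambda>n k. m1pow (of_int u))" by (rule pf_const)
  show "pf (\<lambda>n k. 1)" by (rule pf_const)
  fix n k
  show "1 * m1pow (aff u v c (n + 1) k) = m1pow (of_int u) * m1pow (aff u v c n k)"
    by (simp add: aff_shift m1pow_add)
qed simp

lemma aff_tr_fun: "(\<lambda>n k. f (aff u v c k n)) = (\<lambda>n k. f (aff v u c n k))"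
  by (simp add: aff_def algebra_simps)

lemma hypN_Gamma: "\<forall>n k. aff u v c n k \<notin> \<int>\<^sub>\<le>\<^sub>0 \<Longrightarrow> hypN (\<lambda>n k. Gamma (aff u v c n k))"
  by (rule hypNpt_hypN[OF hypNpt_Gamma])
lemma hypK_Gamma:
  assumes "\<forall>n k. aff u v c n k \<notin> \<int>\<^sub>\<le>\<^sub>0" shows "hypK (\<lambda>n k. Gamma (aff u v c n k))"
proof (rule hypNpt_hypK)
  have "\<forall>n k. aff v u c n k \<notin> \<int>\<^sub>\<le>\<^sub>0"
  proof (intro allI)
    fix n k
    have "aff v u c n k = aff u v c k n" by (simp add: aff_def algebra_simps)
    then show "aff v u c n k \<notin> \<int>\<^sub>\<le>\<^sub>0" using assms by simp
  qed
  then show "hypNpt (\<lambda>n k. Gamma (aff u v c k n))" unfolding aff_tr_fun by (rule hypNpt_Gamma)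
qed
lemma hypN_rGamma: "hypN (\<lambda>n k. rGamma (aff u v c n k))"
  by (rule hypNpt_hypN[OF hypNpt_rGamma])
lemma hypK_rGamma: "hypK (\<lambda>n k. rGamma (aff u v c n k))"
  by (rule hypNpt_hypK) (unfold aff_tr_fun, rule hypNpt_rGamma)
lemma hypN_m1pow: "hypN (\<lambda>n k. m1pow (aff u v c n k))"
  by (rule hypNpt_hypN[OF hypNpt_m1pow])
lemma hypK_m1pow: "hypK (\<lambda>n k. m1pow (aff u v c n k))"
  by (rule hypNpt_hypK) (unfold aff_tr_fun, rule hypNpt_m1pow)

lemma Gamma_conv:
  assumes "\<forall>n k. y n k + of_int lo \<notin> \<int>\<^sub>\<le>\<^sub>0" "lo \<le> j" "pf y"
  shows "\<exists>f. pf f \<and> (\<forall>n k. Gamma (y n k + of_int j) = f n k * Gamma (y n k + of_int lo))"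
proof (intro exI conjI allI)
  show "pf (\<lambda>n k. pochhammer (y n k + of_int lo) (nat (j - lo)))"
    by (intro pf_poch pf_add assms(3) pf_const)
  fix n k
  have e: "y n k + of_int lo + of_nat (nat (j - lo)) = y n k + of_int j" using assms(2) by simp
  show "Gamma (y n k + of_int j) = pochhammer (y n k + of_int lo) (nat (j - lo)) * Gamma (y n k + of_int lo)"
    using Gamma_poch[of "y n k + of_int lo" "nat (j - lo)"] assms(1) unfolding e by blast
qed

lemma rGamma_conv:
  assumes "j \<le> hi" "pf y"
  shows "\<exists>f. pf f \<and> (\<forall>n k. rGamma (y n k + of_int j) = f n k * rGamma (y n k + of_int hi))"
proof (intro exI conjI allI)
  show "pf (\<lambda>n k. pochhammer (y n k + of_int j) (nat (hi - j)))"
    by (intro pf_poch pf_add assms(2) pf_const)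
  fix n k
  have e: "y n k + of_int j + of_nat (nat (hi - j)) = y n k + of_int hi" using assms(1) by simp
  show "rGamma (y n k + of_int j) = pochhammer (y n k + of_int j) (nat (hi - j)) * rGamma (y n k + of_int hi)"
    using rGamma_poch[of "y n k + of_int j" "nat (hi - j)"] unfolding e .
qed

lemma m1pow_conv:
  shows "\<exists>f. pf f \<and> (\<forall>n k. m1pow (y n k + of_int j) = f n k * m1pow (y n k))"
  by (intro exI[of _ "\<lambda>n k. m1pow (of_int j)"] conjI pf_const) (simp add: m1pow_add)

definition T16 :: "complex \<Rightarrow> complex \<Rightarrow> complex \<Rightarrow> complex \<Rightarrow> complex \<Rightarrow> complex \<Rightarrow> complex \<Rightarrow> complex \<Rightarrow> complex \<Rightarrow> complex \<Rightarrow> complex \<Rightarrow> complex \<Rightarrow> complex \<Rightarrow> complex \<Rightarrow> complex \<Rightarrow> complex \<Rightarrow> complex" where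
  "T16 w g1 g2 g3 r1 r2 r3 g4 g5 g6 r4 r5 r6 r7 r8 r9 = m1pow w * Gamma g1 * Gamma g2 * Gamma g3
     * rGamma r1 * rGamma r2 * rGamma r3 * Gamma g4 * Gamma g5 * Gamma g6
     * rGamma r4 * rGamma r5 * rGamma r6 * rGamma r7 * rGamma r8 * rGamma r9"

definition Vv :: "complex \<Rightarrow> complex \<Rightarrow> complex \<Rightarrow> complex \<Rightarrow> complex \<Rightarrow> complex \<Rightarrow> complex" where
  "Vv k a b c d e = T16 (d + e) (a + k) (b + k) (c + k) (d + k) (e + k) (a + b + c - d - e + 2 + k)
     (a + b - d - e + 2) (a + c - d - e + 2) (b + c - d - e + 2)
     (a - d + 1) (a - e + 1) (b - d + 1) (b - e + 1) (c - d + 1) (c - e + 1)"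

definition hon :: "complex \<Rightarrow> complex \<Rightarrow> complex \<Rightarrow> complex \<Rightarrow> complex \<Rightarrow> complex \<Rightarrow> bool" where
  "hon k a b c d e \<longleftrightarrow> {a + k, b + k, c + k, a + b - d - e + 2, a + c - d - e + 2, b + c - d - e + 2}
           \<inter> \<int>\<^sub>\<le>\<^sub>0 = {}"

lemma seedF0_eq: "seedF0 k a b c d e = (if hon k a b c d e then Some (Vv k a b c d e) else None)"
  by (simp add: seedF0_def hon_def Vv_def T16_def)

definition Pa :: "complex \<Rightarrow> complex \<Rightarrow> complex \<Rightarrow> complex \<Rightarrow> complex \<Rightarrow> complex \<Rightarrow> complex" where
  "Pa k a b c d e = T16 (d + e) (a + k) (b + k) (c + k) (d + k - 1) (e + k - 1) (a + b + c - d - e + 2 + k)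
     (a + b - d - e + 2) (a + c - d - e + 2) (b + c - d - e + 2)
     (a - d + 2) (a - e + 2) (b - d + 1) (b - e + 1) (c - d + 1) (c - e + 1)"

definition Pd :: "complex \<Rightarrow> complex \<Rightarrow> complex \<Rightarrow> complex \<Rightarrow> complex \<Rightarrow> complex \<Rightarrow> complex" where
  "Pd k a b c d e = - (a + b + c - 2 * d - e + 1) *
     T16 (d + e) (a + k) (b + k) (c + k) (d + k) (e + k - 1) (a + b + c - d - e + 1 + k)
     (a + b - d - e + 1) (a + c - d - e + 1) (b + c - d - e + 1)
     (a - d + 1) (a - e + 1) (b - d + 1) (b - e + 1) (c - d + 1) (c - e + 1)"

lemma Gp1: "z \<notin> \<int>\<^sub>\<le>\<^sub>0 \<Longrightarrow> w = z + 1 \<Longrightarrow> Gamma w = z * Gamma z"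
  by (simp add: Gamma_plus1)
lemma rGp1: "w = z + 1 \<Longrightarrow> rGamma z = z * rGamma w"
  by (simp add: rGamma_plus1)

lemma CA:
  assumes h: "hon k a b c d e"
  shows "Vv k (a + 1) b c d e - Vv k a b c d e = Pa (k + 1) a b c d e - Pa k a b c d e"
proof -
  define S where "S = a + b + c - d - e + 2 + k"
  define BA where "BA = T16 (d + e) (a + k) (b + k) (c + k) (d + k) (e + k) (S + 1)
     (a + b - d - e + 2) (a + c - d - e + 2) (b + c - d - e + 2)
     (a - d + 2) (a - e + 2) (b - d + 1) (b - e + 1) (c - d + 1) (c - e + 1)"
  have hh: "a + k \<notin> \<int>\<^sub>\<le>\<^sub>0" "b + k \<notin> \<int>\<^sub>\<le>\<^sub>0" "c + k \<notin> \<int>\<^sub>\<le>\<^sub>0"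
    "a + b - d - e + 2 \<notin> \<int>\<^sub>\<le>\<^sub>0" "a + c - d - e + 2 \<notin> \<int>\<^sub>\<le>\<^sub>0"
    using h unfolding hon_def by auto
  have V1: "Vv k (a + 1) b c d e = ((a + k) * (a + b - d - e + 2) * (a + c - d - e + 2)) * BA"
  proof -
    have e1: "Gamma (a + 1 + k) = (a + k) * Gamma (a + k)" by (rule Gp1[OF hh(1)]) simp
    have e2: "Gamma (a + 1 + b - d - e + 2) = (a + b - d - e + 2) * Gamma (a + b - d - e + 2)"
      by (rule Gp1[OF hh(4)]) simp
    have e3: "Gamma (a + 1 + c - d - e + 2) = (a + c - d - e + 2) * Gamma (a + c - d - e + 2)"
      by (rule Gp1[OF hh(5)]) simp
    have a1: "a + 1 + b + c - d - e + 2 + k = S + 1" "a + 1 - d + 1 = a - d + 2" "a + 1 - e + 1 = a - e + 2"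
      by (simp_all add: S_def)
    show ?thesis unfolding Vv_def T16_def BA_def a1 e1 e2 e3 by (simp only: ac_simps)
  qed
  have V0: "Vv k a b c d e = (S * (a - d + 1) * (a - e + 1)) * BA"
  proof -
    have e1: "rGamma S = S * rGamma (S + 1)" by (rule rGp1) simp
    have e2: "rGamma (a - d + 1) = (a - d + 1) * rGamma (a - d + 2)" by (rule rGp1) simp
    have e3: "rGamma (a - e + 1) = (a - e + 1) * rGamma (a - e + 2)" by (rule rGp1) simp
    show ?thesis unfolding Vv_def T16_def BA_def S_def[symmetric] e1 e2 e3 by (simp only: ac_simps)
  qed
  have P1: "Pa (k + 1) a b c d e = ((a + k) * (b + k) * (c + k)) * BA"
  proof -
    have e1: "Gamma (a + (k + 1)) = (a + k) * Gamma (a + k)" by (rule Gp1[OF hh(1)]) simp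
    have e2: "Gamma (b + (k + 1)) = (b + k) * Gamma (b + k)" by (rule Gp1[OF hh(2)]) simp
    have e3: "Gamma (c + (k + 1)) = (c + k) * Gamma (c + k)" by (rule Gp1[OF hh(3)]) simp
    have a1: "d + (k + 1) - 1 = d + k" "e + (k + 1) - 1 = e + k" "a + b + c - d - e + 2 + (k + 1) = S + 1"
      by (simp_all add: S_def)
    show ?thesis unfolding Pa_def T16_def BA_def a1 e1 e2 e3 by (simp only: ac_simps)
  qed
  have P0: "Pa k a b c d e = ((d + k - 1) * (e + k - 1) * S) * BA"
  proof -
    have e1: "rGamma S = S * rGamma (S + 1)" by (rule rGp1) simp
    have e2: "rGamma (d + k - 1) = (d + k - 1) * rGamma (d + k)" by (rule rGp1) simp
    have e3: "rGamma (e + k - 1) = (e + k - 1) * rGamma (e + k)" by (rule rGp1) simp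
    show ?thesis unfolding Pa_def T16_def BA_def S_def[symmetric] e1 e2 e3 by (simp only: ac_simps)
  qed
  have poly: "(a + k) * (a + b - d - e + 2) * (a + c - d - e + 2) - S * (a - d + 1) * (a - e + 1)
      = (a + k) * (b + k) * (c + k) - (d + k - 1) * (e + k - 1) * S"
    unfolding S_def by algebra
  show ?thesis unfolding V1 V0 P1 P0 using poly by (simp add: left_diff_distrib[symmetric])
qed

lemma CD:
  assumes h: "hon k a b c (d + 1) e"
  shows "Vv k a b c (d + 1) e - Vv k a b c d e = Pd (k + 1) a b c d e - Pd k a b c d e"
proof -
  define S where "S = a + b + c - d - e + 2 + k"
  define z where "z = a + b + c - d - e + 1 + k"
  define \<sigma> where "\<sigma> = a + b + c - 2 * d - e + 1"
  define qab where "qab = a + b - d - e + 1"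
  define qac where "qac = a + c - d - e + 1"
  define qbc where "qbc = b + c - d - e + 1"
  define BD where "BD = T16 (d + e) (a + k) (b + k) (c + k) (d + k + 1) (e + k) S
     qab qac qbc (a - d + 1) (a - e + 1) (b - d + 1) (b - e + 1) (c - d + 1) (c - e + 1)"
  have hh: "a + k \<notin> \<int>\<^sub>\<le>\<^sub>0" "b + k \<notin> \<int>\<^sub>\<le>\<^sub>0" "c + k \<notin> \<int>\<^sub>\<le>\<^sub>0"
    "qab \<notin> \<int>\<^sub>\<le>\<^sub>0" "qac \<notin> \<int>\<^sub>\<le>\<^sub>0" "qbc \<notin> \<int>\<^sub>\<le>\<^sub>0"
  proof -
    have "a + b - (d + 1) - e + 2 = qab" "a + c - (d + 1) - e + 2 = qac" "b + c - (d + 1) - e + 2 = qbc"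
      by (simp_all add: qab_def qac_def qbc_def)
    then show "a + k \<notin> \<int>\<^sub>\<le>\<^sub>0" "b + k \<notin> \<int>\<^sub>\<le>\<^sub>0" "c + k \<notin> \<int>\<^sub>\<le>\<^sub>0"
      "qab \<notin> \<int>\<^sub>\<le>\<^sub>0" "qac \<notin> \<int>\<^sub>\<le>\<^sub>0" "qbc \<notin> \<int>\<^sub>\<le>\<^sub>0"
      using h unfolding hon_def by auto
  qed
  have V1: "Vv k a b c (d + 1) e = (- ((S - 1) * (a - d) * (b - d) * (c - d))) * BD"
  proof -
    have e0: "m1pow (d + 1 + e) = - m1pow (d + e)"
    proof -
      have "d + 1 + e = (d + e) + 1" by simp
      then show ?thesis by (simp add: m1pow_add m1pow_one)
    qed
    have e1: "rGamma (S - 1) = (S - 1) * rGamma S" by (rule rGp1) simp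
    have e2: "rGamma (a - d) = (a - d) * rGamma (a - d + 1)" by (rule rGp1) simp
    have e3: "rGamma (b - d) = (b - d) * rGamma (b - d + 1)" by (rule rGp1) simp
    have e4: "rGamma (c - d) = (c - d) * rGamma (c - d + 1)" by (rule rGp1) simp
    have a1: "d + 1 + k = d + k + 1" "a + b + c - (d + 1) - e + 2 + k = S - 1"
      "a + b - (d + 1) - e + 2 = qab" "a + c - (d + 1) - e + 2 = qac" "b + c - (d + 1) - e + 2 = qbc"
      "a - (d + 1) + 1 = a - d" "b - (d + 1) + 1 = b - d" "c - (d + 1) + 1 = c - d"
      by (simp_all add: S_def qab_def qac_def qbc_def)
    show ?thesis unfolding Vv_def T16_def BD_def a1 e0 e1 e2 e3 e4 by (simp add: ac_simps)
  qed
  have V0: "Vv k a b c d e = ((d + k) * qab * qac * qbc) * BD"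
  proof -
    have e1: "rGamma (d + k) = (d + k) * rGamma (d + k + 1)" by (rule rGp1) simp
    have e2: "Gamma (a + b - d - e + 2) = qab * Gamma qab" by (rule Gp1[OF hh(4)]) (simp add: qab_def)
    have e3: "Gamma (a + c - d - e + 2) = qac * Gamma qac" by (rule Gp1[OF hh(5)]) (simp add: qac_def)
    have e4: "Gamma (b + c - d - e + 2) = qbc * Gamma qbc" by (rule Gp1[OF hh(6)]) (simp add: qbc_def)
    show ?thesis unfolding Vv_def T16_def BD_def S_def[symmetric] e1 e2 e3 e4 by (simp only: ac_simps)
  qed
  have P1: "Pd (k + 1) a b c d e = (- \<sigma> * ((a + k) * (b + k) * (c + k))) * BD"
  proof -
    have e1: "Gamma (a + (k + 1)) = (a + k) * Gamma (a + k)" by (rule Gp1[OF hh(1)]) simp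
    have e2: "Gamma (b + (k + 1)) = (b + k) * Gamma (b + k)" by (rule Gp1[OF hh(2)]) simp
    have e3: "Gamma (c + (k + 1)) = (c + k) * Gamma (c + k)" by (rule Gp1[OF hh(3)]) simp
    have a1: "d + (k + 1) = d + k + 1" "e + (k + 1) - 1 = e + k" "a + b + c - d - e + 1 + (k + 1) = S"
      by (simp_all add: S_def)
    show ?thesis unfolding Pd_def T16_def BD_def a1 e1 e2 e3 \<sigma>_def[symmetric]
      qab_def[symmetric] qac_def[symmetric] qbc_def[symmetric] by (simp only: ac_simps)
  qed
  have P0: "Pd k a b c d e = (- \<sigma> * ((d + k) * (e + k - 1) * z)) * BD"
  proof -
    have e1: "rGamma (d + k) = (d + k) * rGamma (d + k + 1)" by (rule rGp1) simp
    have e2: "rGamma (e + k - 1) = (e + k - 1) * rGamma (e + k)" by (rule rGp1) simp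
    have e3: "rGamma z = z * rGamma S" by (rule rGp1) (simp add: z_def S_def)
    show ?thesis unfolding Pd_def T16_def BD_def z_def[symmetric] e1 e2 e3 \<sigma>_def[symmetric]
      qab_def[symmetric] qac_def[symmetric] qbc_def[symmetric] by (simp only: ac_simps)
  qed
  have poly: "(- ((S - 1) * (a - d) * (b - d) * (c - d))) - (d + k) * qab * qac * qbc
      = (- \<sigma> * ((a + k) * (b + k) * (c + k))) - (- \<sigma> * ((d + k) * (e + k - 1) * z))"
    unfolding S_def z_def \<sigma>_def qab_def qac_def qbc_def by algebra
  have "Vv k a b c (d + 1) e - Vv k a b c d e
      = ((- ((S - 1) * (a - d) * (b - d) * (c - d))) - (d + k) * qab * qac * qbc) * BD"
    unfolding V1 V0 by (rule left_diff_distrib[symmetric])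
  also have "\<dots> = ((- \<sigma> * ((a + k) * (b + k) * (c + k))) - (- \<sigma> * ((d + k) * (e + k - 1) * z))) * BD"
    unfolding poly ..
  also have "\<dots> = Pd (k + 1) a b c d e - Pd k a b c d e"
    unfolding P1 P0 by (rule left_diff_distrib)
  finally show ?thesis .
qed

lemma Vv_swap_ab: "Vv k a b c d e = Vv k b a c d e"
  unfolding Vv_def T16_def by (simp add: algebra_simps)
lemma Vv_swap_ac: "Vv k a b c d e = Vv k c b a d e"
  unfolding Vv_def T16_def by (simp add: algebra_simps)
lemma Vv_swap_de: "Vv k a b c d e = Vv k a b c e d"
  unfolding Vv_def T16_def by (simp add: algebra_simps)
lemma hon_swap_ab: "hon k a b c d e = hon k b a c d e"
  unfolding hon_def by (simp add: algebra_simps insert_commute)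
lemma hon_swap_ac: "hon k a b c d e = hon k c b a d e"
  unfolding hon_def by (simp add: algebra_simps insert_commute)
lemma hon_swap_de: "hon k a b c d e = hon k a b c e d"
  unfolding hon_def by (simp add: algebra_simps insert_commute)

lemma simT16:
  assumes hAK: "\<forall>n k. yAK n k + of_int lAK \<notin> \<int>\<^sub>\<le>\<^sub>0" and iAK: "lAK \<le> oAK" and pAK: "pf yAK"
    and hBK: "\<forall>n k. yBK n k + of_int lBK \<notin> \<int>\<^sub>\<le>\<^sub>0" and iBK: "lBK \<le> oBK" and pBK: "pf yBK"
    and hCK: "\<forall>n k. yCK n k + of_int lCK \<notin> \<int>\<^sub>\<le>\<^sub>0" and iCK: "lCK \<le> oCK" and pCK: "pf yCK"
    and iDK: "oDK \<le> lDK" and pDK: "pf yDK"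
    and iEK: "oEK \<le> lEK" and pEK: "pf yEK"
    and iS: "oS \<le> lS" and pS: "pf yS"
    and hAB: "\<forall>n k. yAB n k + of_int lAB \<notin> \<int>\<^sub>\<le>\<^sub>0" and iAB: "lAB \<le> oAB" and pAB: "pf yAB"
    and hAC: "\<forall>n k. yAC n k + of_int lAC \<notin> \<int>\<^sub>\<le>\<^sub>0" and iAC: "lAC \<le> oAC" and pAC: "pf yAC"
    and hBC: "\<forall>n k. yBC n k + of_int lBC \<notin> \<int>\<^sub>\<le>\<^sub>0" and iBC: "lBC \<le> oBC" and pBC: "pf yBC"
    and iAD: "oAD \<le> lAD" and pAD: "pf yAD"
    and iAE: "oAE \<le> lAE" and pAE: "pf yAE"
    and iBD: "oBD \<le> lBD" and pBD: "pf yBD"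
    and iBE: "oBE \<le> lBE" and pBE: "pf yBE"
    and iCD: "oCD \<le> lCD" and pCD: "pf yCD"
    and iCE: "oCE \<le> lCE" and pCE: "pf yCE"
  shows "sim (\<lambda>n k. T16 (yw n k + of_int ow) (yAK n k + of_int oAK) (yBK n k + of_int oBK) (yCK n k + of_int oCK) (yDK n k + of_int oDK) (yEK n k + of_int oEK) (yS n k + of_int oS) (yAB n k + of_int oAB) (yAC n k + of_int oAC) (yBC n k + of_int oBC) (yAD n k + of_int oAD) (yAE n k + of_int oAE) (yBD n k + of_int oBD) (yBE n k + of_int oBE) (yCD n k + of_int oCD) (yCE n k + of_int oCE))
    (\<lambda>n k. T16 (yw n k) (yAK n k + of_int lAK) (yBK n k + of_int lBK) (yCK n k + of_int lCK) (yDK n k + of_int lDK) (yEK n k + of_int lEK) (yS n k + of_int lS) (yAB n k + of_int lAB) (yAC n k + of_int lAC) (yBC n k + of_int lBC) (yAD n k + of_int lAD) (yAE n k + of_int lAE) (yBD n k + of_int lBD) (yBE n k + of_int lBE) (yCD n k + of_int lCD) (yCE n k + of_int lCE))"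
proof -
  obtain fw where fw: "pf fw" "\<forall>n k. m1pow (yw n k + of_int ow) = fw n k * m1pow (yw n k)"
    using m1pow_conv[of yw ow] by blast
  obtain fAK where fAK: "pf fAK" "\<forall>n k. Gamma (yAK n k + of_int oAK) = fAK n k * Gamma (yAK n k + of_int lAK)"
    using Gamma_conv[OF hAK iAK pAK] by blast
  obtain fBK where fBK: "pf fBK" "\<forall>n k. Gamma (yBK n k + of_int oBK) = fBK n k * Gamma (yBK n k + of_int lBK)"
    using Gamma_conv[OF hBK iBK pBK] by blast
  obtain fCK where fCK: "pf fCK" "\<forall>n k. Gamma (yCK n k + of_int oCK) = fCK n k * Gamma (yCK n k + of_int lCK)"
    using Gamma_conv[OF hCK iCK pCK] by blast
  obtain fDK where fDK: "pf fDK" "\<forall>n k. rGamma (yDK n k + of_int oDK) = fDK n k * rGamma (yDK n k + of_int lDK)"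
    using rGamma_conv[OF iDK pDK] by blast
  obtain fEK where fEK: "pf fEK" "\<forall>n k. rGamma (yEK n k + of_int oEK) = fEK n k * rGamma (yEK n k + of_int lEK)"
    using rGamma_conv[OF iEK pEK] by blast
  obtain fS where fS: "pf fS" "\<forall>n k. rGamma (yS n k + of_int oS) = fS n k * rGamma (yS n k + of_int lS)"
    using rGamma_conv[OF iS pS] by blast
  obtain fAB where fAB: "pf fAB" "\<forall>n k. Gamma (yAB n k + of_int oAB) = fAB n k * Gamma (yAB n k + of_int lAB)"
    using Gamma_conv[OF hAB iAB pAB] by blast
  obtain fAC where fAC: "pf fAC" "\<forall>n k. Gamma (yAC n k + of_int oAC) = fAC n k * Gamma (yAC n k + of_int lAC)"
    using Gamma_conv[OF hAC iAC pAC] by blast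
  obtain fBC where fBC: "pf fBC" "\<forall>n k. Gamma (yBC n k + of_int oBC) = fBC n k * Gamma (yBC n k + of_int lBC)"
    using Gamma_conv[OF hBC iBC pBC] by blast
  obtain fAD where fAD: "pf fAD" "\<forall>n k. rGamma (yAD n k + of_int oAD) = fAD n k * rGamma (yAD n k + of_int lAD)"
    using rGamma_conv[OF iAD pAD] by blast
  obtain fAE where fAE: "pf fAE" "\<forall>n k. rGamma (yAE n k + of_int oAE) = fAE n k * rGamma (yAE n k + of_int lAE)"
    using rGamma_conv[OF iAE pAE] by blast
  obtain fBD where fBD: "pf fBD" "\<forall>n k. rGamma (yBD n k + of_int oBD) = fBD n k * rGamma (yBD n k + of_int lBD)"
    using rGamma_conv[OF iBD pBD] by blast
  obtain fBE where fBE: "pf fBE" "\<forall>n k. rGamma (yBE n k + of_int oBE) = fBE n k * rGamma (yBE n k + of_int lBE)"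
    using rGamma_conv[OF iBE pBE] by blast
  obtain fCD where fCD: "pf fCD" "\<forall>n k. rGamma (yCD n k + of_int oCD) = fCD n k * rGamma (yCD n k + of_int lCD)"
    using rGamma_conv[OF iCD pCD] by blast
  obtain fCE where fCE: "pf fCE" "\<forall>n k. rGamma (yCE n k + of_int oCE) = fCE n k * rGamma (yCE n k + of_int lCE)"
    using rGamma_conv[OF iCE pCE] by blast
  show ?thesis unfolding sim_def
  proof (intro exI conjI allI)
    show "pf (\<lambda>n k. fw n k * fAK n k * fBK n k * fCK n k * fDK n k * fEK n k * fS n k * fAB n k * fAC n k * fBC n k * fAD n k * fAE n k * fBD n k * fBE n k * fCD n k * fCE n k)"
      by (intro pf_mult fw(1) fAK(1) fBK(1) fCK(1) fDK(1) fEK(1) fS(1) fAB(1) fAC(1) fBC(1) fAD(1) fAE(1) fBD(1) fBE(1) fCD(1) fCE(1))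
    fix n k
    show "T16 (yw n k + of_int ow) (yAK n k + of_int oAK) (yBK n k + of_int oBK) (yCK n k + of_int oCK) (yDK n k + of_int oDK) (yEK n k + of_int oEK) (yS n k + of_int oS) (yAB n k + of_int oAB) (yAC n k + of_int oAC) (yBC n k + of_int oBC) (yAD n k + of_int oAD) (yAE n k + of_int oAE) (yBD n k + of_int oBD) (yBE n k + of_int oBE) (yCD n k + of_int oCD) (yCE n k + of_int oCE) = (fw n k * fAK n k * fBK n k * fCK n k * fDK n k * fEK n k * fS n k * fAB n k * fAC n k * fBC n k * fAD n k * fAE n k * fBD n k * fBE n k * fCD n k * fCE n k) * T16 (yw n k) (yAK n k + of_int lAK) (yBK n k + of_int lBK) (yCK n k + of_int lCK) (yDK n k + of_int lDK) (yEK n k + of_int lEK) (yS n k + of_int lS) (yAB n k + of_int lAB) (yAC n k + of_int lAC) (yBC n k + of_int lBC) (yAD n k + of_int lAD) (yAE n k + of_int lAE) (yBD n k + of_int lBD) (yBE n k + of_int lBE) (yCD n k + of_int lCD) (yCE n k + of_int lCE)"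
      unfolding T16_def fw(2)[rule_format] fAK(2)[rule_format] fBK(2)[rule_format] fCK(2)[rule_format] fDK(2)[rule_format] fEK(2)[rule_format] fS(2)[rule_format] fAB(2)[rule_format] fAC(2)[rule_format] fBC(2)[rule_format] fAD(2)[rule_format] fAE(2)[rule_format] fBD(2)[rule_format] fBE(2)[rule_format] fCD(2)[rule_format] fCE(2)[rule_format] by (simp only: ac_simps)
  qed
qed
lemma hypN_T16:
  assumes "hypN (\<lambda>n k. m1pow (yw n k))"
    "hypN (\<lambda>n k. Gamma (yAK n k))"
    "hypN (\<lambda>n k. Gamma (yBK n k))"
    "hypN (\<lambda>n k. Gamma (yCK n k))"
    "hypN (\<lambda>n k. rGamma (yDK n k))"
    "hypN (\<lambda>n k. rGamma (yEK n k))"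
    "hypN (\<lambda>n k. rGamma (yS n k))"
    "hypN (\<lambda>n k. Gamma (yAB n k))"
    "hypN (\<lambda>n k. Gamma (yAC n k))"
    "hypN (\<lambda>n k. Gamma (yBC n k))"
    "hypN (\<lambda>n k. rGamma (yAD n k))"
    "hypN (\<lambda>n k. rGamma (yAE n k))"
    "hypN (\<lambda>n k. rGamma (yBD n k))"
    "hypN (\<lambda>n k. rGamma (yBE n k))"
    "hypN (\<lambda>n k. rGamma (yCD n k))"
    "hypN (\<lambda>n k. rGamma (yCE n k))"
  shows "hypN (\<lambda>n k. T16 (yw n k) (yAK n k) (yBK n k) (yCK n k) (yDK n k) (yEK n k) (yS n k) (yAB n k) (yAC n k) (yBC n k) (yAD n k) (yAE n k) (yBD n k) (yBE n k) (yCD n k) (yCE n k))"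
  unfolding T16_def by (intro hypN_mult assms)
lemma hypK_T16:
  assumes "hypK (\<lambda>n k. m1pow (yw n k))"
    "hypK (\<lambda>n k. Gamma (yAK n k))"
    "hypK (\<lambda>n k. Gamma (yBK n k))"
    "hypK (\<lambda>n k. Gamma (yCK n k))"
    "hypK (\<lambda>n k. rGamma (yDK n k))"
    "hypK (\<lambda>n k. rGamma (yEK n k))"
    "hypK (\<lambda>n k. rGamma (yS n k))"
    "hypK (\<lambda>n k. Gamma (yAB n k))"
    "hypK (\<lambda>n k. Gamma (yAC n k))"
    "hypK (\<lambda>n k. Gamma (yBC n k))"
    "hypK (\<lambda>n k. rGamma (yAD n k))"
    "hypK (\<lambda>n k. rGamma (yAE n k))"
    "hypK (\<lambda>n k. rGamma (yBD n k))"
    "hypK (\<lambda>n k. rGamma (yBE n k))"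
    "hypK (\<lambda>n k. rGamma (yCD n k))"
    "hypK (\<lambda>n k. rGamma (yCE n k))"
  shows "hypK (\<lambda>n k. T16 (yw n k) (yAK n k) (yBK n k) (yCK n k) (yDK n k) (yEK n k) (yS n k) (yAB n k) (yAC n k) (yBC n k) (yAD n k) (yAE n k) (yBD n k) (yBE n k) (yCD n k) (yCE n k))"
  unfolding T16_def by (intro hypK_mult assms)

lemma seg:
  fixes \<phi> \<psi> :: "int \<Rightarrow> int \<Rightarrow> int \<Rightarrow> complex"
  assumes st: "\<And>j. min 0 m \<le> j \<Longrightarrow> j < max 0 m \<Longrightarrow> (\<forall>n k. \<phi> (j + 1) n k - \<phi> j n k = \<psi> j n (k + 1) - \<psi> j n k)"
    and sm: "\<And>j. min 0 m \<le> j \<Longrightarrow> j < max 0 m \<Longrightarrow> sim (\<psi> j) Bb"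
  shows "\<exists>g. sim g Bb \<and> (\<forall>n k. \<phi> m n k - \<phi> 0 n k = g n (k + 1) - g n k)"
proof (cases "m \<ge> 0")
  case True
  define N where "N = nat m"
  have mN: "m = int N" using True by (simp add: N_def)
  define g where "g = (\<lambda>n k. \<Sum>i<N. \<psi> (int i) n k)"
  have "sim g Bb" unfolding g_def
    by (rule sim_sum) (use sm mN in auto)
  moreover have "\<forall>n k. \<phi> m n k - \<phi> 0 n k = g n (k + 1) - g n k"
  proof (intro allI)
    fix n k
    have "\<phi> m n k - \<phi> 0 n k = (\<Sum>i<N. \<phi> (int (Suc i)) n k - \<phi> (int i) n k)"
      unfolding mN by (subst sum_lessThan_telescope) simp
    also have "\<dots> = (\<Sum>i<N. \<psi> (int i) n (k + 1) - \<psi> (int i) n k)"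
    proof (rule sum.cong)
      fix i assume "i \<in> {..<N}"
      then have "min 0 m \<le> int i" "int i < max 0 m" using mN by auto
      then have F: "\<forall>n k. \<phi> (int i + 1) n k - \<phi> (int i) n k = \<psi> (int i) n (k + 1) - \<psi> (int i) n k"
        by (rule st)
      have e: "int (Suc i) = int i + 1" by simp
      show "\<phi> (int (Suc i)) n k - \<phi> (int i) n k = \<psi> (int i) n (k + 1) - \<psi> (int i) n k"
        unfolding e using F by blast
    qed simp
    also have "\<dots> = g n (k + 1) - g n k" unfolding g_def by (simp add: sum_subtractf)
    finally show "\<phi> m n k - \<phi> 0 n k = g n (k + 1) - g n k" .
  qed
  ultimately show ?thesis by blast
next
  case False
  define N where "N = nat (- m)"
  have mN: "m = - int N" using False by (simp add: N_def)
  define g where "g = (\<lambda>n k. - (\<Sum>i<N. \<psi> (m + int i) n k))"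
  have "sim g Bb" unfolding g_def
    by (rule sim_neg, rule sim_sum) (use sm mN in auto)
  moreover have "\<forall>n k. \<phi> m n k - \<phi> 0 n k = g n (k + 1) - g n k"
  proof (intro allI)
    fix n k
    have "\<phi> 0 n k - \<phi> m n k = (\<Sum>i<N. \<phi> (m + int (Suc i)) n k - \<phi> (m + int i) n k)"
      by (subst sum_lessThan_telescope[where f = "\<lambda>i. \<phi> (m + int i) n k"]) (simp add: mN)
    also have "\<dots> = (\<Sum>i<N. \<psi> (m + int i) n (k + 1) - \<psi> (m + int i) n k)"
    proof (rule sum.cong)
      fix i assume "i \<in> {..<N}"
      then have "min 0 m \<le> m + int i" "m + int i < max 0 m" using mN by auto
      then have F: "\<forall>n k. \<phi> (m + int i + 1) n k - \<phi> (m + int i) n k = \<psi> (m + int i) n (k + 1) - \<psi> (m + int i) n k"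
        by (rule st)
      have e: "m + int (Suc i) = m + int i + 1" by simp
      show "\<phi> (m + int (Suc i)) n k - \<phi> (m + int i) n k = \<psi> (m + int i) n (k + 1) - \<psi> (m + int i) n k"
        unfolding e using F by blast
    qed simp
    finally have "\<phi> m n k - \<phi> 0 n k = - (\<Sum>i<N. \<psi> (m + int i) n (k + 1) - \<psi> (m + int i) n k)"
      by (simp add: algebra_simps)
    also have "\<dots> = g n (k + 1) - g n k" unfolding g_def by (simp add: sum_subtractf)
    finally show "\<phi> m n k - \<phi> 0 n k = g n (k + 1) - g n k" .
  qed
  ultimately show ?thesis by blast
qed

definition Pb :: "complex \<Rightarrow> complex \<Rightarrow> complex \<Rightarrow> complex \<Rightarrow> complex \<Rightarrow> complex \<Rightarrow> complex" where
  "Pb k a b c d e = T16 (d + e) (a + k) (b + k) (c + k) (d + k - 1) (e + k - 1) (a + b + c - d - e + 2 + k)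
     (a + b - d - e + 2) (a + c - d - e + 2) (b + c - d - e + 2)
     (a - d + 1) (a - e + 1) (b - d + 2) (b - e + 2) (c - d + 1) (c - e + 1)"
definition Pc :: "complex \<Rightarrow> complex \<Rightarrow> complex \<Rightarrow> complex \<Rightarrow> complex \<Rightarrow> complex \<Rightarrow> complex" where
  "Pc k a b c d e = T16 (d + e) (a + k) (b + k) (c + k) (d + k - 1) (e + k - 1) (a + b + c - d - e + 2 + k)
     (a + b - d - e + 2) (a + c - d - e + 2) (b + c - d - e + 2)
     (a - d + 1) (a - e + 1) (b - d + 1) (b - e + 1) (c - d + 2) (c - e + 2)"
definition Pe :: "complex \<Rightarrow> complex \<Rightarrow> complex \<Rightarrow> complex \<Rightarrow> complex \<Rightarrow> complex \<Rightarrow> complex" where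
  "Pe k a b c d e = - (a + b + c - d - 2 * e + 1) *
     T16 (d + e) (a + k) (b + k) (c + k) (d + k - 1) (e + k) (a + b + c - d - e + 1 + k)
     (a + b - d - e + 1) (a + c - d - e + 1) (b + c - d - e + 1)
     (a - d + 1) (a - e + 1) (b - d + 1) (b - e + 1) (c - d + 1) (c - e + 1)"

lemma Pb_eq: "Pb k a b c d e = Pa k b a c d e"
  unfolding Pa_def Pb_def T16_def by (simp add: algebra_simps)
lemma Pc_eq: "Pc k a b c d e = Pa k c b a d e"
  unfolding Pa_def Pc_def T16_def by (simp add: algebra_simps)
lemma Pe_eq: "Pe k a b c d e = Pd k a b c e d"
  unfolding Pd_def Pe_def T16_def by (simp add: algebra_simps)

lemma CB:
  assumes h: "hon k a b c d e"
  shows "Vv k a (b + 1) c d e - Vv k a b c d e = Pb (k + 1) a b c d e - Pb k a b c d e"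
proof -
  have "hon k b a c d e" using h hon_swap_ab by blast
  from CA[OF this] show ?thesis unfolding Pb_eq using Vv_swap_ab by metis
qed

lemma CC:
  assumes h: "hon k a b c d e"
  shows "Vv k a b (c + 1) d e - Vv k a b c d e = Pc (k + 1) a b c d e - Pc k a b c d e"
proof -
  have "hon k c b a d e" using h hon_swap_ac by blast
  from CA[OF this] show ?thesis unfolding Pc_eq using Vv_swap_ac by metis
qed

lemma CE:
  assumes h: "hon k a b c d (e + 1)"
  shows "Vv k a b c d (e + 1) - Vv k a b c d e = Pe (k + 1) a b c d e - Pe k a b c d e"
proof -
  have "hon k a b c (e + 1) d" using h hon_swap_de by blast
  from CD[OF this] show ?thesis unfolding Pe_eq using Vv_swap_de by metis
qed

locale wz =
  fixes K A B C D E :: int and k0 a b c d e :: complex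
  assumes hon_all: "\<And>n k. hon (of_int K * of_int n + k0 + of_int k) (of_int A * of_int n + a)
     (of_int B * of_int n + b) (of_int C * of_int n + c) (of_int D * of_int n + d) (of_int E * of_int n + e)"
begin

definition "xk n k = (of_int K * of_int n + k0 + of_int k :: complex)"
definition "xa (n::int) (k::int) = (of_int A * of_int n + a :: complex)"
definition "xb (n::int) (k::int) = (of_int B * of_int n + b :: complex)"
definition "xc (n::int) (k::int) = (of_int C * of_int n + c :: complex)"
definition "xd (n::int) (k::int) = (of_int D * of_int n + d :: complex)"
definition "xe (n::int) (k::int) = (of_int E * of_int n + e :: complex)"

definition "VV ok oa ob oc od oe n k = Vv (xk n k + of_int ok) (xa n k + of_int oa) (xb n k + of_int ob)
   (xc n k + of_int oc) (xd n k + of_int od) (xe n k + of_int oe)"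
definition "PA ok oa ob oc od oe n k = Pa (xk n k + of_int ok) (xa n k + of_int oa) (xb n k + of_int ob)
   (xc n k + of_int oc) (xd n k + of_int od) (xe n k + of_int oe)"
definition "PB ok oa ob oc od oe n k = Pb (xk n k + of_int ok) (xa n k + of_int oa) (xb n k + of_int ob)
   (xc n k + of_int oc) (xd n k + of_int od) (xe n k + of_int oe)"
definition "PC ok oa ob oc od oe n k = Pc (xk n k + of_int ok) (xa n k + of_int oa) (xb n k + of_int ob)
   (xc n k + of_int oc) (xd n k + of_int od) (xe n k + of_int oe)"
definition "PD ok oa ob oc od oe n k = Pd (xk n k + of_int ok) (xa n k + of_int oa) (xb n k + of_int ob)
   (xc n k + of_int oc) (xd n k + of_int od) (xe n k + of_int oe)"
definition "PE ok oa ob oc od oe n k = Pe (xk n k + of_int ok) (xa n k + of_int oa) (xb n k + of_int ob)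
   (xc n k + of_int oc) (xd n k + of_int od) (xe n k + of_int oe)"
definition "sigD ok oa ob oc od oe n k = (xa n k + of_int oa) + (xb n k + of_int ob) + (xc n k + of_int oc)
   - 2 * (xd n k + of_int od) - (xe n k + of_int oe) + 1"
definition "sigE ok oa ob oc od oe n k = (xa n k + of_int oa) + (xb n k + of_int ob) + (xc n k + of_int oc)
   - (xd n k + of_int od) - 2 * (xe n k + of_int oe) + 1"

definition "M = \<bar>K\<bar> + \<bar>A\<bar> + \<bar>B\<bar> + \<bar>C\<bar> + \<bar>D\<bar> + \<bar>E\<bar>"
definition "L = 8 * M + 8"
definition "lab = min 0 (A + B - D - E)"
definition "lac = min 0 (A + C - D - E)"
definition "lbc = min 0 (B + C - D - E)"

lemma M_nonneg: "M \<ge> 0" unfolding M_def by simp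

definition "yw = aff (D + E) 0 (d + e)"
definition "yAK = aff (A + K) 1 (a + k0)"
definition "yBK = aff (B + K) 1 (b + k0)"
definition "yCK = aff (C + K) 1 (c + k0)"
definition "yDK = aff (D + K) 1 (d + k0)"
definition "yEK = aff (E + K) 1 (e + k0)"
definition "yS = aff (A + B + C - D - E + K) 1 (a + b + c - d - e + 2 + k0)"
definition "yAB = aff (A + B - D - E) 0 (a + b - d - e + 2)"
definition "yAC = aff (A + C - D - E) 0 (a + c - d - e + 2)"
definition "yBC = aff (B + C - D - E) 0 (b + c - d - e + 2)"
definition "yAD = aff (A - D) 0 (a - d + 1)"
definition "yAE = aff (A - E) 0 (a - e + 1)"
definition "yBD = aff (B - D) 0 (b - d + 1)"
definition "yBE = aff (B - E) 0 (b - e + 1)"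
definition "yCD = aff (C - D) 0 (c - d + 1)"
definition "yCE = aff (C - E) 0 (c - e + 1)"

definition "Bs n k = T16 (yw n k) (yAK n k + of_int (- L)) (yBK n k + of_int (- L)) (yCK n k + of_int (- L))
   (yDK n k + of_int L) (yEK n k + of_int L) (yS n k + of_int L)
   (yAB n k + of_int lab) (yAC n k + of_int lac) (yBC n k + of_int lbc)
   (yAD n k + of_int L) (yAE n k + of_int L) (yBD n k + of_int L) (yBE n k + of_int L)
   (yCD n k + of_int L) (yCE n k + of_int L)"

definition "goodc ok oa ob oc od oe \<longleftrightarrow> \<bar>ok\<bar> \<le> M \<and> \<bar>oa\<bar> \<le> M \<and> \<bar>ob\<bar> \<le> M \<and> \<bar>oc\<bar> \<le> M \<and>
   \<bar>od\<bar> \<le> M \<and> \<bar>oe\<bar> \<le> M \<and> lab \<le> oa + ob - od - oe \<and> lac \<le> oa + oc - od - oe \<and> lbc \<le> ob + oc - od - oe"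

lemma hon0: "yAK n k \<notin> \<int>\<^sub>\<le>\<^sub>0 \<and> yBK n k \<notin> \<int>\<^sub>\<le>\<^sub>0 \<and> yCK n k \<notin> \<int>\<^sub>\<le>\<^sub>0 \<and>
   yAB n k \<notin> \<int>\<^sub>\<le>\<^sub>0 \<and> yAC n k \<notin> \<int>\<^sub>\<le>\<^sub>0 \<and> yBC n k \<notin> \<int>\<^sub>\<le>\<^sub>0"
proof -
  have e: "yAK n k = of_int A * of_int n + a + (of_int K * of_int n + k0 + of_int k)"
    "yBK n k = of_int B * of_int n + b + (of_int K * of_int n + k0 + of_int k)"
    "yCK n k = of_int C * of_int n + c + (of_int K * of_int n + k0 + of_int k)"
    "yAB n k = of_int A * of_int n + a + (of_int B * of_int n + b) - (of_int D * of_int n + d) - (of_int E * of_int n + e) + 2"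
    "yAC n k = of_int A * of_int n + a + (of_int C * of_int n + c) - (of_int D * of_int n + d) - (of_int E * of_int n + e) + 2"
    "yBC n k = of_int B * of_int n + b + (of_int C * of_int n + c) - (of_int D * of_int n + d) - (of_int E * of_int n + e) + 2"
    by (simp_all add: yAK_def yBK_def yCK_def yAB_def yAC_def yBC_def aff_def algebra_simps)
  show ?thesis using hon_all[of n k] unfolding hon_def e by auto
qed

lemma honAK_shift: "yAK n k + of_int j \<notin> \<int>\<^sub>\<le>\<^sub>0"
proof -
  have "yAK n k + of_int j = yAK n (k + j)" by (simp add: yAK_def aff_def algebra_simps)
  then show ?thesis using hon0 by simp
qed
lemma honBK_shift: "yBK n k + of_int j \<notin> \<int>\<^sub>\<le>\<^sub>0"
proof -
  have "yBK n k + of_int j = yBK n (k + j)" by (simp add: yBK_def aff_def algebra_simps)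
  then show ?thesis using hon0 by simp
qed
lemma honCK_shift: "yCK n k + of_int j \<notin> \<int>\<^sub>\<le>\<^sub>0"
proof -
  have "yCK n k + of_int j = yCK n (k + j)" by (simp add: yCK_def aff_def algebra_simps)
  then show ?thesis using hon0 by simp
qed
lemmas honK_shift = honAK_shift honBK_shift honCK_shift

lemma honAB_shift: "lab \<le> j \<Longrightarrow> yAB n k + of_int j \<notin> \<int>\<^sub>\<le>\<^sub>0"
proof (cases "j \<ge> 0")
  case True then show ?thesis using hon0 nonpos_Ints_shift by blast
next
  case False
  assume "lab \<le> j"
  then have j: "j - (A + B - D - E) \<ge> 0" using False unfolding lab_def by linarith
  have "yAB n k + of_int j = yAB (n + 1) k + of_int (j - (A + B - D - E))"
    by (simp add: yAB_def aff_def algebra_simps)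
  moreover have "yAB (n + 1) k + of_int (j - (A + B - D - E)) \<notin> \<int>\<^sub>\<le>\<^sub>0"
    by (rule nonpos_Ints_shift[OF _ j]) (use hon0 in blast)
  ultimately show ?thesis by metis
qed
lemma honAC_shift: "lac \<le> j \<Longrightarrow> yAC n k + of_int j \<notin> \<int>\<^sub>\<le>\<^sub>0"
proof (cases "j \<ge> 0")
  case True then show ?thesis using hon0 nonpos_Ints_shift by blast
next
  case False
  assume "lac \<le> j"
  then have j: "j - (A + C - D - E) \<ge> 0" using False unfolding lac_def by linarith
  have "yAC n k + of_int j = yAC (n + 1) k + of_int (j - (A + C - D - E))"
    by (simp add: yAC_def aff_def algebra_simps)
  moreover have "yAC (n + 1) k + of_int (j - (A + C - D - E)) \<notin> \<int>\<^sub>\<le>\<^sub>0"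
    by (rule nonpos_Ints_shift[OF _ j]) (use hon0 in blast)
  ultimately show ?thesis by metis
qed
lemma honBC_shift: "lbc \<le> j \<Longrightarrow> yBC n k + of_int j \<notin> \<int>\<^sub>\<le>\<^sub>0"
proof (cases "j \<ge> 0")
  case True then show ?thesis using hon0 nonpos_Ints_shift by blast
next
  case False
  assume "lbc \<le> j"
  then have j: "j - (B + C - D - E) \<ge> 0" using False unfolding lbc_def by linarith
  have "yBC n k + of_int j = yBC (n + 1) k + of_int (j - (B + C - D - E))"
    by (simp add: yBC_def aff_def algebra_simps)
  moreover have "yBC (n + 1) k + of_int (j - (B + C - D - E)) \<notin> \<int>\<^sub>\<le>\<^sub>0"
    by (rule nonpos_Ints_shift[OF _ j]) (use hon0 in blast)
  ultimately show ?thesis by metis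
qed

lemma pf_xs: "pf xa" "pf xb" "pf xc" "pf xd" "pf xe"
  unfolding xa_def[abs_def] xb_def[abs_def] xc_def[abs_def] xd_def[abs_def] xe_def[abs_def]
  by (intro pf.intros)+

lemma pf_sigD: "pf (sigD ok oa ob oc od oe)"
  unfolding sigD_def[abs_def]
  by (intro pf_add pf_diff pf_mult pf_const pf_xs)
lemma pf_sigE: "pf (sigE ok oa ob oc od oe)"
  unfolding sigE_def[abs_def]
  by (intro pf_add pf_diff pf_mult pf_const pf_xs)

lemma pf_ys: "pf yw" "pf yAK" "pf yBK" "pf yCK" "pf yDK" "pf yEK" "pf yS" "pf yAB" "pf yAC" "pf yBC" "pf yAD" "pf yAE" "pf yBD" "pf yBE" "pf yCD" "pf yCE"
  unfolding yw_def yAK_def yBK_def yCK_def yDK_def yEK_def yS_def yAB_def yAC_def yBC_def yAD_def yAE_def yBD_def yBE_def yCD_def yCE_def by (rule pf_aff)+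

lemma honK_shift2: "yAK n k - of_int j \<notin> \<int>\<^sub>\<le>\<^sub>0" "yBK n k - of_int j \<notin> \<int>\<^sub>\<le>\<^sub>0" "yCK n k - of_int j \<notin> \<int>\<^sub>\<le>\<^sub>0"
  using honK_shift[of n k "- j"] by simp_all

lemma VV_eq: "VV ok oa ob oc od oe n k = T16 (yw n k + of_int (od + oe)) (yAK n k + of_int (oa + ok)) (yBK n k + of_int (ob + ok)) (yCK n k + of_int (oc + ok)) (yDK n k + of_int (od + ok)) (yEK n k + of_int (oe + ok)) (yS n k + of_int (oa + ob + oc - od - oe + ok)) (yAB n k + of_int (oa + ob - od - oe)) (yAC n k + of_int (oa + oc - od - oe)) (yBC n k + of_int (ob + oc - od - oe)) (yAD n k + of_int (oa - od)) (yAE n k + of_int (oa - oe)) (yBD n k + of_int (ob - od)) (yBE n k + of_int (ob - oe)) (yCD n k + of_int (oc - od)) (yCE n k + of_int (oc - oe))"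
  unfolding VV_def Vv_def by (simp add: yw_def yAK_def yBK_def yCK_def yDK_def yEK_def yS_def yAB_def yAC_def yBC_def yAD_def yAE_def yBD_def yBE_def yCD_def yCE_def xk_def xa_def xb_def xc_def xd_def xe_def aff_def algebra_simps)
lemma PA_eq: "PA ok oa ob oc od oe n k = T16 (yw n k + of_int (od + oe)) (yAK n k + of_int (oa + ok)) (yBK n k + of_int (ob + ok)) (yCK n k + of_int (oc + ok)) (yDK n k + of_int (od + ok - 1)) (yEK n k + of_int (oe + ok - 1)) (yS n k + of_int (oa + ob + oc - od - oe + ok)) (yAB n k + of_int (oa + ob - od - oe)) (yAC n k + of_int (oa + oc - od - oe)) (yBC n k + of_int (ob + oc - od - oe)) (yAD n k + of_int (oa - od + 1)) (yAE n k + of_int (oa - oe + 1)) (yBD n k + of_int (ob - od)) (yBE n k + of_int (ob - oe)) (yCD n k + of_int (oc - od)) (yCE n k + of_int (oc - oe))"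
  unfolding PA_def Pa_def by (simp add: yw_def yAK_def yBK_def yCK_def yDK_def yEK_def yS_def yAB_def yAC_def yBC_def yAD_def yAE_def yBD_def yBE_def yCD_def yCE_def xk_def xa_def xb_def xc_def xd_def xe_def aff_def algebra_simps)
lemma PB_eq: "PB ok oa ob oc od oe n k = T16 (yw n k + of_int (od + oe)) (yAK n k + of_int (oa + ok)) (yBK n k + of_int (ob + ok)) (yCK n k + of_int (oc + ok)) (yDK n k + of_int (od + ok - 1)) (yEK n k + of_int (oe + ok - 1)) (yS n k + of_int (oa + ob + oc - od - oe + ok)) (yAB n k + of_int (oa + ob - od - oe)) (yAC n k + of_int (oa + oc - od - oe)) (yBC n k + of_int (ob + oc - od - oe)) (yAD n k + of_int (oa - od)) (yAE n k + of_int (oa - oe)) (yBD n k + of_int (ob - od + 1)) (yBE n k + of_int (ob - oe + 1)) (yCD n k + of_int (oc - od)) (yCE n k + of_int (oc - oe))"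
  unfolding PB_def Pb_def by (simp add: yw_def yAK_def yBK_def yCK_def yDK_def yEK_def yS_def yAB_def yAC_def yBC_def yAD_def yAE_def yBD_def yBE_def yCD_def yCE_def xk_def xa_def xb_def xc_def xd_def xe_def aff_def algebra_simps)
lemma PC_eq: "PC ok oa ob oc od oe n k = T16 (yw n k + of_int (od + oe)) (yAK n k + of_int (oa + ok)) (yBK n k + of_int (ob + ok)) (yCK n k + of_int (oc + ok)) (yDK n k + of_int (od + ok - 1)) (yEK n k + of_int (oe + ok - 1)) (yS n k + of_int (oa + ob + oc - od - oe + ok)) (yAB n k + of_int (oa + ob - od - oe)) (yAC n k + of_int (oa + oc - od - oe)) (yBC n k + of_int (ob + oc - od - oe)) (yAD n k + of_int (oa - od)) (yAE n k + of_int (oa - oe)) (yBD n k + of_int (ob - od)) (yBE n k + of_int (ob - oe)) (yCD n k + of_int (oc - od + 1)) (yCE n k + of_int (oc - oe + 1))"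
  unfolding PC_def Pc_def by (simp add: yw_def yAK_def yBK_def yCK_def yDK_def yEK_def yS_def yAB_def yAC_def yBC_def yAD_def yAE_def yBD_def yBE_def yCD_def yCE_def xk_def xa_def xb_def xc_def xd_def xe_def aff_def algebra_simps)
lemma PD_eq: "PD ok oa ob oc od oe n k = - sigD ok oa ob oc od oe n k * T16 (yw n k + of_int (od + oe)) (yAK n k + of_int (oa + ok)) (yBK n k + of_int (ob + ok)) (yCK n k + of_int (oc + ok)) (yDK n k + of_int (od + ok)) (yEK n k + of_int (oe + ok - 1)) (yS n k + of_int (oa + ob + oc - od - oe + ok - 1)) (yAB n k + of_int (oa + ob - od - oe - 1)) (yAC n k + of_int (oa + oc - od - oe - 1)) (yBC n k + of_int (ob + oc - od - oe - 1)) (yAD n k + of_int (oa - od)) (yAE n k + of_int (oa - oe)) (yBD n k + of_int (ob - od)) (yBE n k + of_int (ob - oe)) (yCD n k + of_int (oc - od)) (yCE n k + of_int (oc - oe))"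
  unfolding PD_def Pd_def sigD_def
  by (rule arg_cong2[where f = "(*)"], simp, simp add: yw_def yAK_def yBK_def yCK_def yDK_def yEK_def yS_def yAB_def yAC_def yBC_def yAD_def yAE_def yBD_def yBE_def yCD_def yCE_def xk_def xa_def xb_def xc_def xd_def xe_def aff_def algebra_simps)
lemma PE_eq: "PE ok oa ob oc od oe n k = - sigE ok oa ob oc od oe n k * T16 (yw n k + of_int (od + oe)) (yAK n k + of_int (oa + ok)) (yBK n k + of_int (ob + ok)) (yCK n k + of_int (oc + ok)) (yDK n k + of_int (od + ok - 1)) (yEK n k + of_int (oe + ok)) (yS n k + of_int (oa + ob + oc - od - oe + ok - 1)) (yAB n k + of_int (oa + ob - od - oe - 1)) (yAC n k + of_int (oa + oc - od - oe - 1)) (yBC n k + of_int (ob + oc - od - oe - 1)) (yAD n k + of_int (oa - od)) (yAE n k + of_int (oa - oe)) (yBD n k + of_int (ob - od)) (yBE n k + of_int (ob - oe)) (yCD n k + of_int (oc - od)) (yCE n k + of_int (oc - oe))"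
  unfolding PE_def Pe_def sigE_def
  by (rule arg_cong2[where f = "(*)"], simp, simp add: yw_def yAK_def yBK_def yCK_def yDK_def yEK_def yS_def yAB_def yAC_def yBC_def yAD_def yAE_def yBD_def yBE_def yCD_def yCE_def xk_def xa_def xb_def xc_def xd_def xe_def aff_def algebra_simps)
lemma sim_VV: "goodc ok oa ob oc od oe \<Longrightarrow> sim (VV ok oa ob oc od oe) Bs"
proof -
  assume g: "goodc ok oa ob oc od oe"
  have b: "-M \<le> ok" "ok \<le> M" "-M \<le> oa" "oa \<le> M" "-M \<le> ob" "ob \<le> M" "-M \<le> oc" "oc \<le> M"
    using g unfolding goodc_def by auto
  have b2: "-M \<le> od" "od \<le> M" "-M \<le> oe" "oe \<le> M" "lab \<le> oa + ob - (od) - (oe)" "lac \<le> oa + oc - (od) - (oe)" "lbc \<le> ob + oc - (od) - (oe)"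
    using g unfolding goodc_def by auto
  have M0: "M \<ge> 0" by (rule M_nonneg)
  have Lb: "L \<ge> 8 * M + 8" "L \<le> 8 * M + 8" by (simp_all add: L_def)
  have s: "sim (\<lambda>n k. T16 (yw n k + of_int (od + oe)) (yAK n k + of_int (oa + ok)) (yBK n k + of_int (ob + ok)) (yCK n k + of_int (oc + ok)) (yDK n k + of_int (od + ok)) (yEK n k + of_int (oe + ok)) (yS n k + of_int (oa + ob + oc - od - oe + ok)) (yAB n k + of_int (oa + ob - od - oe)) (yAC n k + of_int (oa + oc - od - oe)) (yBC n k + of_int (ob + oc - od - oe)) (yAD n k + of_int (oa - od)) (yAE n k + of_int (oa - oe)) (yBD n k + of_int (ob - od)) (yBE n k + of_int (ob - oe)) (yCD n k + of_int (oc - od)) (yCE n k + of_int (oc - oe))) Bs"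
    unfolding Bs_def by (rule simT16) (use b b2 M0 Lb in \<open>auto simp: honK_shift honK_shift2 honAB_shift honAC_shift honBC_shift pf_ys\<close>)
  then show ?thesis by (simp add: VV_eq[abs_def])
qed
lemma sim_PA: "goodc ok oa ob oc od oe \<Longrightarrow> sim (PA ok oa ob oc od oe) Bs"
proof -
  assume g: "goodc ok oa ob oc od oe"
  have b: "-M \<le> ok" "ok \<le> M" "-M \<le> oa" "oa \<le> M" "-M \<le> ob" "ob \<le> M" "-M \<le> oc" "oc \<le> M"
    using g unfolding goodc_def by auto
  have b2: "-M \<le> od" "od \<le> M" "-M \<le> oe" "oe \<le> M" "lab \<le> oa + ob - (od) - (oe)" "lac \<le> oa + oc - (od) - (oe)" "lbc \<le> ob + oc - (od) - (oe)"
    using g unfolding goodc_def by auto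
  have M0: "M \<ge> 0" by (rule M_nonneg)
  have Lb: "L \<ge> 8 * M + 8" "L \<le> 8 * M + 8" by (simp_all add: L_def)
  have s: "sim (\<lambda>n k. T16 (yw n k + of_int (od + oe)) (yAK n k + of_int (oa + ok)) (yBK n k + of_int (ob + ok)) (yCK n k + of_int (oc + ok)) (yDK n k + of_int (od + ok - 1)) (yEK n k + of_int (oe + ok - 1)) (yS n k + of_int (oa + ob + oc - od - oe + ok)) (yAB n k + of_int (oa + ob - od - oe)) (yAC n k + of_int (oa + oc - od - oe)) (yBC n k + of_int (ob + oc - od - oe)) (yAD n k + of_int (oa - od + 1)) (yAE n k + of_int (oa - oe + 1)) (yBD n k + of_int (ob - od)) (yBE n k + of_int (ob - oe)) (yCD n k + of_int (oc - od)) (yCE n k + of_int (oc - oe))) Bs"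
    unfolding Bs_def by (rule simT16) (use b b2 M0 Lb in \<open>auto simp: honK_shift honK_shift2 honAB_shift honAC_shift honBC_shift pf_ys\<close>)
  then show ?thesis by (simp add: PA_eq[abs_def])
qed
lemma sim_PB: "goodc ok oa ob oc od oe \<Longrightarrow> sim (PB ok oa ob oc od oe) Bs"
proof -
  assume g: "goodc ok oa ob oc od oe"
  have b: "-M \<le> ok" "ok \<le> M" "-M \<le> oa" "oa \<le> M" "-M \<le> ob" "ob \<le> M" "-M \<le> oc" "oc \<le> M"
    using g unfolding goodc_def by auto
  have b2: "-M \<le> od" "od \<le> M" "-M \<le> oe" "oe \<le> M" "lab \<le> oa + ob - (od) - (oe)" "lac \<le> oa + oc - (od) - (oe)" "lbc \<le> ob + oc - (od) - (oe)"
    using g unfolding goodc_def by auto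
  have M0: "M \<ge> 0" by (rule M_nonneg)
  have Lb: "L \<ge> 8 * M + 8" "L \<le> 8 * M + 8" by (simp_all add: L_def)
  have s: "sim (\<lambda>n k. T16 (yw n k + of_int (od + oe)) (yAK n k + of_int (oa + ok)) (yBK n k + of_int (ob + ok)) (yCK n k + of_int (oc + ok)) (yDK n k + of_int (od + ok - 1)) (yEK n k + of_int (oe + ok - 1)) (yS n k + of_int (oa + ob + oc - od - oe + ok)) (yAB n k + of_int (oa + ob - od - oe)) (yAC n k + of_int (oa + oc - od - oe)) (yBC n k + of_int (ob + oc - od - oe)) (yAD n k + of_int (oa - od)) (yAE n k + of_int (oa - oe)) (yBD n k + of_int (ob - od + 1)) (yBE n k + of_int (ob - oe + 1)) (yCD n k + of_int (oc - od)) (yCE n k + of_int (oc - oe))) Bs"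
    unfolding Bs_def by (rule simT16) (use b b2 M0 Lb in \<open>auto simp: honK_shift honK_shift2 honAB_shift honAC_shift honBC_shift pf_ys\<close>)
  then show ?thesis by (simp add: PB_eq[abs_def])
qed
lemma sim_PC: "goodc ok oa ob oc od oe \<Longrightarrow> sim (PC ok oa ob oc od oe) Bs"
proof -
  assume g: "goodc ok oa ob oc od oe"
  have b: "-M \<le> ok" "ok \<le> M" "-M \<le> oa" "oa \<le> M" "-M \<le> ob" "ob \<le> M" "-M \<le> oc" "oc \<le> M"
    using g unfolding goodc_def by auto
  have b2: "-M \<le> od" "od \<le> M" "-M \<le> oe" "oe \<le> M" "lab \<le> oa + ob - (od) - (oe)" "lac \<le> oa + oc - (od) - (oe)" "lbc \<le> ob + oc - (od) - (oe)"
    using g unfolding goodc_def by auto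
  have M0: "M \<ge> 0" by (rule M_nonneg)
  have Lb: "L \<ge> 8 * M + 8" "L \<le> 8 * M + 8" by (simp_all add: L_def)
  have s: "sim (\<lambda>n k. T16 (yw n k + of_int (od + oe)) (yAK n k + of_int (oa + ok)) (yBK n k + of_int (ob + ok)) (yCK n k + of_int (oc + ok)) (yDK n k + of_int (od + ok - 1)) (yEK n k + of_int (oe + ok - 1)) (yS n k + of_int (oa + ob + oc - od - oe + ok)) (yAB n k + of_int (oa + ob - od - oe)) (yAC n k + of_int (oa + oc - od - oe)) (yBC n k + of_int (ob + oc - od - oe)) (yAD n k + of_int (oa - od)) (yAE n k + of_int (oa - oe)) (yBD n k + of_int (ob - od)) (yBE n k + of_int (ob - oe)) (yCD n k + of_int (oc - od + 1)) (yCE n k + of_int (oc - oe + 1))) Bs"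
    unfolding Bs_def by (rule simT16) (use b b2 M0 Lb in \<open>auto simp: honK_shift honK_shift2 honAB_shift honAC_shift honBC_shift pf_ys\<close>)
  then show ?thesis by (simp add: PC_eq[abs_def])
qed
lemma sim_PD: "goodc ok oa ob oc (od + 1) oe \<Longrightarrow> sim (PD ok oa ob oc od oe) Bs"
proof -
  assume g: "goodc ok oa ob oc (od + 1) oe"
  have b: "-M \<le> ok" "ok \<le> M" "-M \<le> oa" "oa \<le> M" "-M \<le> ob" "ob \<le> M" "-M \<le> oc" "oc \<le> M"
    using g unfolding goodc_def by auto
  have b2: "-M \<le> od + 1" "od + 1 \<le> M" "-M \<le> oe" "oe \<le> M" "lab \<le> oa + ob - (od + 1) - (oe)" "lac \<le> oa + oc - (od + 1) - (oe)" "lbc \<le> ob + oc - (od + 1) - (oe)"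
    using g unfolding goodc_def by auto
  have M0: "M \<ge> 0" by (rule M_nonneg)
  have Lb: "L \<ge> 8 * M + 8" "L \<le> 8 * M + 8" by (simp_all add: L_def)
  have s: "sim (\<lambda>n k. T16 (yw n k + of_int (od + oe)) (yAK n k + of_int (oa + ok)) (yBK n k + of_int (ob + ok)) (yCK n k + of_int (oc + ok)) (yDK n k + of_int (od + ok)) (yEK n k + of_int (oe + ok - 1)) (yS n k + of_int (oa + ob + oc - od - oe + ok - 1)) (yAB n k + of_int (oa + ob - od - oe - 1)) (yAC n k + of_int (oa + oc - od - oe - 1)) (yBC n k + of_int (ob + oc - od - oe - 1)) (yAD n k + of_int (oa - od)) (yAE n k + of_int (oa - oe)) (yBD n k + of_int (ob - od)) (yBE n k + of_int (ob - oe)) (yCD n k + of_int (oc - od)) (yCE n k + of_int (oc - oe))) Bs"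
    unfolding Bs_def by (rule simT16) (use b b2 M0 Lb in \<open>auto simp: honK_shift honK_shift2 honAB_shift honAC_shift honBC_shift pf_ys\<close>)
  have "sim (\<lambda>n k. - sigD ok oa ob oc od oe n k * T16 (yw n k + of_int (od + oe)) (yAK n k + of_int (oa + ok)) (yBK n k + of_int (ob + ok)) (yCK n k + of_int (oc + ok)) (yDK n k + of_int (od + ok)) (yEK n k + of_int (oe + ok - 1)) (yS n k + of_int (oa + ob + oc - od - oe + ok - 1)) (yAB n k + of_int (oa + ob - od - oe - 1)) (yAC n k + of_int (oa + oc - od - oe - 1)) (yBC n k + of_int (ob + oc - od - oe - 1)) (yAD n k + of_int (oa - od)) (yAE n k + of_int (oa - oe)) (yBD n k + of_int (ob - od)) (yBE n k + of_int (ob - oe)) (yCD n k + of_int (oc - od)) (yCE n k + of_int (oc - oe))) Bs"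
    by (rule sim_pf_mult[OF pf_neg[OF pf_sigD] s])
  then show ?thesis by (simp add: PD_eq[abs_def])
qed
lemma sim_PE: "goodc ok oa ob oc od (oe + 1) \<Longrightarrow> sim (PE ok oa ob oc od oe) Bs"
proof -
  assume g: "goodc ok oa ob oc od (oe + 1)"
  have b: "-M \<le> ok" "ok \<le> M" "-M \<le> oa" "oa \<le> M" "-M \<le> ob" "ob \<le> M" "-M \<le> oc" "oc \<le> M"
    using g unfolding goodc_def by auto
  have b2: "-M \<le> od" "od \<le> M" "-M \<le> oe + 1" "oe + 1 \<le> M" "lab \<le> oa + ob - (od) - (oe + 1)" "lac \<le> oa + oc - (od) - (oe + 1)" "lbc \<le> ob + oc - (od) - (oe + 1)"
    using g unfolding goodc_def by auto
  have M0: "M \<ge> 0" by (rule M_nonneg)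
  have Lb: "L \<ge> 8 * M + 8" "L \<le> 8 * M + 8" by (simp_all add: L_def)
  have s: "sim (\<lambda>n k. T16 (yw n k + of_int (od + oe)) (yAK n k + of_int (oa + ok)) (yBK n k + of_int (ob + ok)) (yCK n k + of_int (oc + ok)) (yDK n k + of_int (od + ok - 1)) (yEK n k + of_int (oe + ok)) (yS n k + of_int (oa + ob + oc - od - oe + ok - 1)) (yAB n k + of_int (oa + ob - od - oe - 1)) (yAC n k + of_int (oa + oc - od - oe - 1)) (yBC n k + of_int (ob + oc - od - oe - 1)) (yAD n k + of_int (oa - od)) (yAE n k + of_int (oa - oe)) (yBD n k + of_int (ob - od)) (yBE n k + of_int (ob - oe)) (yCD n k + of_int (oc - od)) (yCE n k + of_int (oc - oe))) Bs"
    unfolding Bs_def by (rule simT16) (use b b2 M0 Lb in \<open>auto simp: honK_shift honK_shift2 honAB_shift honAC_shift honBC_shift pf_ys\<close>)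
  have "sim (\<lambda>n k. - sigE ok oa ob oc od oe n k * T16 (yw n k + of_int (od + oe)) (yAK n k + of_int (oa + ok)) (yBK n k + of_int (ob + ok)) (yCK n k + of_int (oc + ok)) (yDK n k + of_int (od + ok - 1)) (yEK n k + of_int (oe + ok)) (yS n k + of_int (oa + ob + oc - od - oe + ok - 1)) (yAB n k + of_int (oa + ob - od - oe - 1)) (yAC n k + of_int (oa + oc - od - oe - 1)) (yBC n k + of_int (ob + oc - od - oe - 1)) (yAD n k + of_int (oa - od)) (yAE n k + of_int (oa - oe)) (yBD n k + of_int (ob - od)) (yBE n k + of_int (ob - oe)) (yCD n k + of_int (oc - od)) (yCE n k + of_int (oc - oe))) Bs"
    by (rule sim_pf_mult[OF pf_neg[OF pf_sigE] s])
  then show ?thesis by (simp add: PE_eq[abs_def])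
qed
end

lemma y_aff: "aff u v c n k + of_int j = aff u v (c + of_int j) n k"
  by (simp add: aff_def algebra_simps)

context wz
begin

lemma hon_pt:
  assumes g: "goodc ok oa ob oc od oe"
  shows "hon (xk n k + of_int ok) (xa n k + of_int oa) (xb n k + of_int ob) (xc n k + of_int oc)
     (xd n k + of_int od) (xe n k + of_int oe)"
proof -
  have e: "xa n k + of_int oa + (xk n k + of_int ok) = yAK n k + of_int (oa + ok)"
    "xb n k + of_int ob + (xk n k + of_int ok) = yBK n k + of_int (ob + ok)"
    "xc n k + of_int oc + (xk n k + of_int ok) = yCK n k + of_int (oc + ok)"
    "xa n k + of_int oa + (xb n k + of_int ob) - (xd n k + of_int od) - (xe n k + of_int oe) + 2
       = yAB n k + of_int (oa + ob - od - oe)"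
    "xa n k + of_int oa + (xc n k + of_int oc) - (xd n k + of_int od) - (xe n k + of_int oe) + 2
       = yAC n k + of_int (oa + oc - od - oe)"
    "xb n k + of_int ob + (xc n k + of_int oc) - (xd n k + of_int od) - (xe n k + of_int oe) + 2
       = yBC n k + of_int (ob + oc - od - oe)"
    by (simp_all add: xk_def xa_def xb_def xc_def xd_def xe_def yAK_def yBK_def yCK_def yAB_def yAC_def yBC_def
        aff_def algebra_simps)
  have l: "lab \<le> oa + ob - od - oe" "lac \<le> oa + oc - od - oe" "lbc \<le> ob + oc - od - oe"
    using g unfolding goodc_def by auto
  show ?thesis unfolding hon_def e
    using honAK_shift[of n k "oa + ok"] honBK_shift[of n k "ob + ok"] honCK_shift[of n k "oc + ok"]
      honAB_shift[OF l(1), of n k] honAC_shift[OF l(2), of n k] honBC_shift[OF l(3), of n k]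
    by blast
qed

lemma xs_k: "xa n (k + 1) = xa n k" "xb n (k + 1) = xb n k" "xc n (k + 1) = xc n k"
  "xd n (k + 1) = xd n k" "xe n (k + 1) = xe n k" "xk n (k + 1) + of_int ok = (xk n k + of_int ok) + 1"
  by (simp_all add: xa_def xb_def xc_def xd_def xe_def xk_def algebra_simps)

lemma stepA: "goodc ok oa ob oc od oe \<Longrightarrow>
  VV ok (oa + 1) ob oc od oe n k - VV ok oa ob oc od oe n k = PA ok oa ob oc od oe n (k + 1) - PA ok oa ob oc od oe n k"
proof -
  assume g: "goodc ok oa ob oc od oe"
  have e: "xa n k + of_int (oa + 1) = (xa n k + of_int oa) + 1" by simp
  show ?thesis unfolding VV_def PA_def e xs_k by (rule CA[OF hon_pt[OF g]])
qed
lemma stepB: "goodc ok oa ob oc od oe \<Longrightarrow>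
  VV ok oa (ob + 1) oc od oe n k - VV ok oa ob oc od oe n k = PB ok oa ob oc od oe n (k + 1) - PB ok oa ob oc od oe n k"
proof -
  assume g: "goodc ok oa ob oc od oe"
  have e: "xb n k + of_int (ob + 1) = (xb n k + of_int ob) + 1" by simp
  show ?thesis unfolding VV_def PB_def e xs_k by (rule CB[OF hon_pt[OF g]])
qed
lemma stepC: "goodc ok oa ob oc od oe \<Longrightarrow>
  VV ok oa ob (oc + 1) od oe n k - VV ok oa ob oc od oe n k = PC ok oa ob oc od oe n (k + 1) - PC ok oa ob oc od oe n k"
proof -
  assume g: "goodc ok oa ob oc od oe"
  have e: "xc n k + of_int (oc + 1) = (xc n k + of_int oc) + 1" by simp
  show ?thesis unfolding VV_def PC_def e xs_k by (rule CC[OF hon_pt[OF g]])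
qed
lemma stepD: "goodc ok oa ob oc (od + 1) oe \<Longrightarrow>
  VV ok oa ob oc (od + 1) oe n k - VV ok oa ob oc od oe n k = PD ok oa ob oc od oe n (k + 1) - PD ok oa ob oc od oe n k"
proof -
  assume g: "goodc ok oa ob oc (od + 1) oe"
  have e: "xd n k + of_int (od + 1) = (xd n k + of_int od) + 1" by simp
  have h: "hon (xk n k + of_int ok) (xa n k + of_int oa) (xb n k + of_int ob) (xc n k + of_int oc)
     ((xd n k + of_int od) + 1) (xe n k + of_int oe)" using hon_pt[OF g, of n k] unfolding e .
  show ?thesis unfolding VV_def PD_def e xs_k by (rule CD[OF h])
qed
lemma stepE: "goodc ok oa ob oc od (oe + 1) \<Longrightarrow>
  VV ok oa ob oc od (oe + 1) n k - VV ok oa ob oc od oe n k = PE ok oa ob oc od oe n (k + 1) - PE ok oa ob oc od oe n k"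
proof -
  assume g: "goodc ok oa ob oc od (oe + 1)"
  have e: "xe n k + of_int (oe + 1) = (xe n k + of_int oe) + 1" by simp
  have h: "hon (xk n k + of_int ok) (xa n k + of_int oa) (xb n k + of_int ob) (xc n k + of_int oc)
     (xd n k + of_int od) ((xe n k + of_int oe) + 1)" using hon_pt[OF g, of n k] unfolding e .
  show ?thesis unfolding VV_def PE_def e xs_k by (rule CE[OF h])
qed
lemma stepK: "VV (ok + 1) oa ob oc od oe n k = VV ok oa ob oc od oe n (k + 1)"
proof -
  have e: "xk n k + of_int (ok + 1) = xk n (k + 1) + of_int ok" by (simp add: xk_def algebra_simps)
  show ?thesis unfolding VV_def e xs_k(1-5) ..
qed

end

context wz begin
lemma segA:
  assumes "\<And>j. min oa oa' \<le> j \<Longrightarrow> j \<le> max oa oa' \<Longrightarrow> goodc ok j ob oc od oe"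
  shows "\<exists>g. sim g Bs \<and> (\<forall>n k. VV ok oa' ob oc od oe n k - VV ok oa ob oc od oe n k = g n (k + 1) - g n k)"
proof -
  define m where "m = oa' - oa"
  have st: "\<And>j. min 0 m \<le> j \<Longrightarrow> j < max 0 m \<Longrightarrow> (\<forall>n k. VV ok (oa + (j + 1)) ob oc od oe n k - VV ok (oa + j) ob oc od oe n k = PA ok (oa + j) ob oc od oe n (k + 1) - PA ok (oa + j) ob oc od oe n k)"
  proof -
    fix j assume j: "min 0 m \<le> j" "j < max 0 m"
    have g: "goodc ok (oa + j) ob oc od oe" by (rule assms) (use j in \<open>auto simp: m_def min_def max_def\<close>)
    have e: "oa + (j + 1) = oa + j + 1" by simp
    show "\<forall>n k. VV ok (oa + (j + 1)) ob oc od oe n k - VV ok (oa + j) ob oc od oe n k = PA ok (oa + j) ob oc od oe n (k + 1) - PA ok (oa + j) ob oc od oe n k"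
      unfolding e using stepA[OF g] by blast
  qed
  have sm: "\<And>j. min 0 m \<le> j \<Longrightarrow> j < max 0 m \<Longrightarrow> sim (PA ok (oa + j) ob oc od oe) Bs"
  proof -
    fix j assume j: "min 0 m \<le> j" "j < max 0 m"
    have g: "goodc ok (oa + j) ob oc od oe" by (rule assms) (use j in \<open>auto simp: m_def min_def max_def\<close>)
    show "sim (PA ok (oa + j) ob oc od oe) Bs" by (rule sim_PA[OF g])
  qed
  have "\<exists>g. sim g Bs \<and> (\<forall>n k. VV ok (oa + m) ob oc od oe n k - VV ok (oa + 0) ob oc od oe n k = g n (k + 1) - g n k)"
    by (rule seg[of m "\<lambda>j. VV ok (oa + j) ob oc od oe" "\<lambda>j. PA ok (oa + j) ob oc od oe" Bs, OF st sm])
  then show ?thesis by (simp add: m_def)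
qed

lemma segB:
  assumes "\<And>j. min ob ob' \<le> j \<Longrightarrow> j \<le> max ob ob' \<Longrightarrow> goodc ok oa j oc od oe"
  shows "\<exists>g. sim g Bs \<and> (\<forall>n k. VV ok oa ob' oc od oe n k - VV ok oa ob oc od oe n k = g n (k + 1) - g n k)"
proof -
  define m where "m = ob' - ob"
  have st: "\<And>j. min 0 m \<le> j \<Longrightarrow> j < max 0 m \<Longrightarrow> (\<forall>n k. VV ok oa (ob + (j + 1)) oc od oe n k - VV ok oa (ob + j) oc od oe n k = PB ok oa (ob + j) oc od oe n (k + 1) - PB ok oa (ob + j) oc od oe n k)"
  proof -
    fix j assume j: "min 0 m \<le> j" "j < max 0 m"
    have g: "goodc ok oa (ob + j) oc od oe" by (rule assms) (use j in \<open>auto simp: m_def min_def max_def\<close>)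
    have e: "ob + (j + 1) = ob + j + 1" by simp
    show "\<forall>n k. VV ok oa (ob + (j + 1)) oc od oe n k - VV ok oa (ob + j) oc od oe n k = PB ok oa (ob + j) oc od oe n (k + 1) - PB ok oa (ob + j) oc od oe n k"
      unfolding e using stepB[OF g] by blast
  qed
  have sm: "\<And>j. min 0 m \<le> j \<Longrightarrow> j < max 0 m \<Longrightarrow> sim (PB ok oa (ob + j) oc od oe) Bs"
  proof -
    fix j assume j: "min 0 m \<le> j" "j < max 0 m"
    have g: "goodc ok oa (ob + j) oc od oe" by (rule assms) (use j in \<open>auto simp: m_def min_def max_def\<close>)
    show "sim (PB ok oa (ob + j) oc od oe) Bs" by (rule sim_PB[OF g])
  qed
  have "\<exists>g. sim g Bs \<and> (\<forall>n k. VV ok oa (ob + m) oc od oe n k - VV ok oa (ob + 0) oc od oe n k = g n (k + 1) - g n k)"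
    by (rule seg[of m "\<lambda>j. VV ok oa (ob + j) oc od oe" "\<lambda>j. PB ok oa (ob + j) oc od oe" Bs, OF st sm])
  then show ?thesis by (simp add: m_def)
qed

lemma segC:
  assumes "\<And>j. min oc oc' \<le> j \<Longrightarrow> j \<le> max oc oc' \<Longrightarrow> goodc ok oa ob j od oe"
  shows "\<exists>g. sim g Bs \<and> (\<forall>n k. VV ok oa ob oc' od oe n k - VV ok oa ob oc od oe n k = g n (k + 1) - g n k)"
proof -
  define m where "m = oc' - oc"
  have st: "\<And>j. min 0 m \<le> j \<Longrightarrow> j < max 0 m \<Longrightarrow> (\<forall>n k. VV ok oa ob (oc + (j + 1)) od oe n k - VV ok oa ob (oc + j) od oe n k = PC ok oa ob (oc + j) od oe n (k + 1) - PC ok oa ob (oc + j) od oe n k)"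
  proof -
    fix j assume j: "min 0 m \<le> j" "j < max 0 m"
    have g: "goodc ok oa ob (oc + j) od oe" by (rule assms) (use j in \<open>auto simp: m_def min_def max_def\<close>)
    have e: "oc + (j + 1) = oc + j + 1" by simp
    show "\<forall>n k. VV ok oa ob (oc + (j + 1)) od oe n k - VV ok oa ob (oc + j) od oe n k = PC ok oa ob (oc + j) od oe n (k + 1) - PC ok oa ob (oc + j) od oe n k"
      unfolding e using stepC[OF g] by blast
  qed
  have sm: "\<And>j. min 0 m \<le> j \<Longrightarrow> j < max 0 m \<Longrightarrow> sim (PC ok oa ob (oc + j) od oe) Bs"
  proof -
    fix j assume j: "min 0 m \<le> j" "j < max 0 m"
    have g: "goodc ok oa ob (oc + j) od oe" by (rule assms) (use j in \<open>auto simp: m_def min_def max_def\<close>)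
    show "sim (PC ok oa ob (oc + j) od oe) Bs" by (rule sim_PC[OF g])
  qed
  have "\<exists>g. sim g Bs \<and> (\<forall>n k. VV ok oa ob (oc + m) od oe n k - VV ok oa ob (oc + 0) od oe n k = g n (k + 1) - g n k)"
    by (rule seg[of m "\<lambda>j. VV ok oa ob (oc + j) od oe" "\<lambda>j. PC ok oa ob (oc + j) od oe" Bs, OF st sm])
  then show ?thesis by (simp add: m_def)
qed

lemma segD:
  assumes "\<And>j. min od od' \<le> j \<Longrightarrow> j \<le> max od od' \<Longrightarrow> goodc ok oa ob oc j oe"
  shows "\<exists>g. sim g Bs \<and> (\<forall>n k. VV ok oa ob oc od' oe n k - VV ok oa ob oc od oe n k = g n (k + 1) - g n k)"
proof -
  define m where "m = od' - od"
  have st: "\<And>j. min 0 m \<le> j \<Longrightarrow> j < max 0 m \<Longrightarrow> (\<forall>n k. VV ok oa ob oc (od + (j + 1)) oe n k - VV ok oa ob oc (od + j) oe n k = PD ok oa ob oc (od + j) oe n (k + 1) - PD ok oa ob oc (od + j) oe n k)"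
  proof -
    fix j assume j: "min 0 m \<le> j" "j < max 0 m"
    have g: "goodc ok oa ob oc (od + j + 1) oe" by (rule assms) (use j in \<open>auto simp: m_def min_def max_def\<close>)
    have e: "od + (j + 1) = od + j + 1" by simp
    show "\<forall>n k. VV ok oa ob oc (od + (j + 1)) oe n k - VV ok oa ob oc (od + j) oe n k = PD ok oa ob oc (od + j) oe n (k + 1) - PD ok oa ob oc (od + j) oe n k"
      unfolding e using stepD[OF g] by blast
  qed
  have sm: "\<And>j. min 0 m \<le> j \<Longrightarrow> j < max 0 m \<Longrightarrow> sim (PD ok oa ob oc (od + j) oe) Bs"
  proof -
    fix j assume j: "min 0 m \<le> j" "j < max 0 m"
    have g: "goodc ok oa ob oc (od + j + 1) oe" by (rule assms) (use j in \<open>auto simp: m_def min_def max_def\<close>)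
    show "sim (PD ok oa ob oc (od + j) oe) Bs" by (rule sim_PD[OF g])
  qed
  have "\<exists>g. sim g Bs \<and> (\<forall>n k. VV ok oa ob oc (od + m) oe n k - VV ok oa ob oc (od + 0) oe n k = g n (k + 1) - g n k)"
    by (rule seg[of m "\<lambda>j. VV ok oa ob oc (od + j) oe" "\<lambda>j. PD ok oa ob oc (od + j) oe" Bs, OF st sm])
  then show ?thesis by (simp add: m_def)
qed

lemma segE:
  assumes "\<And>j. min oe oe' \<le> j \<Longrightarrow> j \<le> max oe oe' \<Longrightarrow> goodc ok oa ob oc od j"
  shows "\<exists>g. sim g Bs \<and> (\<forall>n k. VV ok oa ob oc od oe' n k - VV ok oa ob oc od oe n k = g n (k + 1) - g n k)"
proof -
  define m where "m = oe' - oe"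
  have st: "\<And>j. min 0 m \<le> j \<Longrightarrow> j < max 0 m \<Longrightarrow> (\<forall>n k. VV ok oa ob oc od (oe + (j + 1)) n k - VV ok oa ob oc od (oe + j) n k = PE ok oa ob oc od (oe + j) n (k + 1) - PE ok oa ob oc od (oe + j) n k)"
  proof -
    fix j assume j: "min 0 m \<le> j" "j < max 0 m"
    have g: "goodc ok oa ob oc od (oe + j + 1)" by (rule assms) (use j in \<open>auto simp: m_def min_def max_def\<close>)
    have e: "oe + (j + 1) = oe + j + 1" by simp
    show "\<forall>n k. VV ok oa ob oc od (oe + (j + 1)) n k - VV ok oa ob oc od (oe + j) n k = PE ok oa ob oc od (oe + j) n (k + 1) - PE ok oa ob oc od (oe + j) n k"
      unfolding e using stepE[OF g] by blast
  qed
  have sm: "\<And>j. min 0 m \<le> j \<Longrightarrow> j < max 0 m \<Longrightarrow> sim (PE ok oa ob oc od (oe + j)) Bs"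
  proof -
    fix j assume j: "min 0 m \<le> j" "j < max 0 m"
    have g: "goodc ok oa ob oc od (oe + j + 1)" by (rule assms) (use j in \<open>auto simp: m_def min_def max_def\<close>)
    show "sim (PE ok oa ob oc od (oe + j)) Bs" by (rule sim_PE[OF g])
  qed
  have "\<exists>g. sim g Bs \<and> (\<forall>n k. VV ok oa ob oc od (oe + m) n k - VV ok oa ob oc od (oe + 0) n k = g n (k + 1) - g n k)"
    by (rule seg[of m "\<lambda>j. VV ok oa ob oc od (oe + j)" "\<lambda>j. PE ok oa ob oc od (oe + j)" Bs, OF st sm])
  then show ?thesis by (simp add: m_def)
qed

lemma segK:
  assumes "\<And>j. min ok ok' \<le> j \<Longrightarrow> j \<le> max ok ok' \<Longrightarrow> goodc j oa ob oc od oe"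
  shows "\<exists>g. sim g Bs \<and> (\<forall>n k. VV ok' oa ob oc od oe n k - VV ok oa ob oc od oe n k = g n (k + 1) - g n k)"
proof -
  define m where "m = ok' - ok"
  have st: "\<And>j. min 0 m \<le> j \<Longrightarrow> j < max 0 m \<Longrightarrow> (\<forall>n k. VV (ok + (j + 1)) oa ob oc od oe n k - VV (ok + j) oa ob oc od oe n k = VV (ok + j) oa ob oc od oe n (k + 1) - VV (ok + j) oa ob oc od oe n k)"
  proof -
    fix j assume j: "min 0 m \<le> j" "j < max 0 m"
    have g: "goodc (ok + j) oa ob oc od oe" by (rule assms) (use j in \<open>auto simp: m_def min_def max_def\<close>)
    have e: "ok + (j + 1) = ok + j + 1" by simp
    show "\<forall>n k. VV (ok + (j + 1)) oa ob oc od oe n k - VV (ok + j) oa ob oc od oe n k = VV (ok + j) oa ob oc od oe n (k + 1) - VV (ok + j) oa ob oc od oe n k"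
      unfolding e stepK by simp
  qed
  have sm: "\<And>j. min 0 m \<le> j \<Longrightarrow> j < max 0 m \<Longrightarrow> sim (VV (ok + j) oa ob oc od oe) Bs"
  proof -
    fix j assume j: "min 0 m \<le> j" "j < max 0 m"
    have g: "goodc (ok + j) oa ob oc od oe" by (rule assms) (use j in \<open>auto simp: m_def min_def max_def\<close>)
    show "sim (VV (ok + j) oa ob oc od oe) Bs" by (rule sim_VV[OF g])
  qed
  have "\<exists>g. sim g Bs \<and> (\<forall>n k. VV (ok + m) oa ob oc od oe n k - VV (ok + 0) oa ob oc od oe n k = g n (k + 1) - g n k)"
    by (rule seg[of m "\<lambda>j. VV (ok + j) oa ob oc od oe" "\<lambda>j. VV (ok + j) oa ob oc od oe" Bs, OF st sm])
  then show ?thesis by (simp add: m_def)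
qed

end

lemma mm1: "min x y \<le> (j::int) \<Longrightarrow> x \<le> y \<Longrightarrow> x \<le> j" by simp
lemma mm2: "min x y \<le> (j::int) \<Longrightarrow> y \<le> x \<Longrightarrow> y \<le> j" by simp
lemma MM1: "j \<le> max x (y::int) \<Longrightarrow> x \<le> y \<Longrightarrow> j \<le> y" by simp
lemma MM2: "j \<le> max x (y::int) \<Longrightarrow> y \<le> x \<Longrightarrow> j \<le> x" by simp
lemma mK: "min 0 K \<le> (j::int) \<Longrightarrow> - \<bar>K\<bar> \<le> j" by simp
lemma MK: "j \<le> max 0 (K::int) \<Longrightarrow> j \<le> \<bar>K\<bar>" by simp
lemma tele11: "(v11::complex) - v0 = (v11 - v10) + (v10 - v9) + (v9 - v8) + (v8 - v7) + (v7 - v6) + (v6 - v5) + (v5 - v4) + (v4 - v3) + (v3 - v2) + (v2 - v1) + (v1 - v0)" by (simp add: algebra_simps)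
lemma sum11: "(x11 - y11) + (x10 - y10) + (x9 - y9) + (x8 - y8) + (x7 - y7) + (x6 - y6) + (x5 - y5) + (x4 - y4) + (x3 - y3) + (x2 - y2) + (x1 - y1) = ((x1 + x2 + x3 + x4 + x5 + x6 + x7 + x8 + x9 + x10 + x11) - (y1 + y2 + y3 + y4 + y5 + y6 + y7 + y8 + y9 + y10 + y11 :: complex))" by (simp add: algebra_simps)

context wz begin

lemma goodcI1:
  assumes "-M \<le> ok" "ok \<le> M" "-M \<le> oa" "oa \<le> M" "-M \<le> ob" "ob \<le> M" "-M \<le> oc" "oc \<le> M"
    "-M \<le> od" "od \<le> M" "-M \<le> oe" "oe \<le> M"
    "0 \<le> oa + ob - od - oe" "0 \<le> oa + oc - od - oe" "0 \<le> ob + oc - od - oe"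
  shows "goodc ok oa ob oc od oe"
  using assms unfolding goodc_def lab_def lac_def lbc_def by auto

lemma goodcI2:
  assumes "-M \<le> ok" "ok \<le> M" "-M \<le> oa" "oa \<le> M" "-M \<le> ob" "ob \<le> M" "-M \<le> oc" "oc \<le> M"
    "-M \<le> od" "od \<le> M" "-M \<le> oe" "oe \<le> M"
    "A + B - D - E \<le> oa + ob - od - oe" "A + C - D - E \<le> oa + oc - od - oe" "B + C - D - E \<le> ob + oc - od - oe"
  shows "goodc ok oa ob oc od oe"
  using assms unfolding goodc_def lab_def lac_def lbc_def by auto

lemma hB: "\<forall>n k. aff (A + K) 1 (a + k0 + of_int (- L)) n k \<notin> \<int>\<^sub>\<le>\<^sub>0"
  "\<forall>n k. aff (B + K) 1 (b + k0 + of_int (- L)) n k \<notin> \<int>\<^sub>\<le>\<^sub>0"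
  "\<forall>n k. aff (C + K) 1 (c + k0 + of_int (- L)) n k \<notin> \<int>\<^sub>\<le>\<^sub>0"
  "\<forall>n k. aff (A + B - D - E) 0 (a + b - d - e + 2 + of_int lab) n k \<notin> \<int>\<^sub>\<le>\<^sub>0"
  "\<forall>n k. aff (A + C - D - E) 0 (a + c - d - e + 2 + of_int lac) n k \<notin> \<int>\<^sub>\<le>\<^sub>0"
  "\<forall>n k. aff (B + C - D - E) 0 (b + c - d - e + 2 + of_int lbc) n k \<notin> \<int>\<^sub>\<le>\<^sub>0"
  using honAK_shift[of _ _ "- L"] honBK_shift[of _ _ "- L"] honCK_shift[of _ _ "- L"]
    honAB_shift[OF order_refl] honAC_shift[OF order_refl] honBC_shift[OF order_refl]
  unfolding yAK_def yBK_def yCK_def yAB_def yAC_def yBC_def y_aff by blast+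

lemma Bs_aff: "Bs = (\<lambda>n k. T16 (aff (D + E) 0 (d + e) n k) (aff (A + K) 1 (a + k0 + of_int (- L)) n k)
   (aff (B + K) 1 (b + k0 + of_int (- L)) n k) (aff (C + K) 1 (c + k0 + of_int (- L)) n k)
   (aff (D + K) 1 (d + k0 + of_int L) n k) (aff (E + K) 1 (e + k0 + of_int L) n k)
   (aff (A + B + C - D - E + K) 1 (a + b + c - d - e + 2 + k0 + of_int L) n k)
   (aff (A + B - D - E) 0 (a + b - d - e + 2 + of_int lab) n k)
   (aff (A + C - D - E) 0 (a + c - d - e + 2 + of_int lac) n k)
   (aff (B + C - D - E) 0 (b + c - d - e + 2 + of_int lbc) n k)
   (aff (A - D) 0 (a - d + 1 + of_int L) n k) (aff (A - E) 0 (a - e + 1 + of_int L) n k)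
   (aff (B - D) 0 (b - d + 1 + of_int L) n k) (aff (B - E) 0 (b - e + 1 + of_int L) n k)
   (aff (C - D) 0 (c - d + 1 + of_int L) n k) (aff (C - E) 0 (c - e + 1 + of_int L) n k))"
  unfolding Bs_def yw_def yAK_def yBK_def yCK_def yDK_def yEK_def yS_def yAB_def yAC_def yBC_def
    yAD_def yAE_def yBD_def yBE_def yCD_def yCE_def y_aff ..

lemma hypN_Bs: "hypN Bs"
  unfolding Bs_aff
  by (rule hypN_T16) (rule hypN_m1pow hypN_rGamma hypN_Gamma hB)+

lemma hypK_Bs: "hypK Bs"
  unfolding Bs_aff
  by (rule hypK_T16) (rule hypK_m1pow hypK_rGamma hypK_Gamma hB)+

lemma main: "\<exists>G. hypergeometric2 G \<and> (\<forall>n k. VV K A B C D E n k - VV 0 0 0 0 0 0 n k = G n (k + 1) - G n k)"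
proof -
  define ap where "ap = max A 0"
  define an where "an = max (- A) 0"
  define bp where "bp = max B 0"
  define bn where "bn = max (- B) 0"
  define cp where "cp = max C 0"
  define cn where "cn = max (- C) 0"
  define dp where "dp = max D 0"
  define dn where "dn = max (- D) 0"
  define ep where "ep = max E 0"
  define en where "en = max (- E) 0"
  have PA: "0 \<le> ap" "0 \<le> an" "A \<le> ap" "- an \<le> A" "ap \<le> \<bar>A\<bar>" "an \<le> \<bar>A\<bar>"
    unfolding ap_def an_def by auto
  have PB: "0 \<le> bp" "0 \<le> bn" "B \<le> bp" "- bn \<le> B" "bp \<le> \<bar>B\<bar>" "bn \<le> \<bar>B\<bar>"
    unfolding bp_def bn_def by auto
  have PC: "0 \<le> cp" "0 \<le> cn" "C \<le> cp" "- cn \<le> C" "cp \<le> \<bar>C\<bar>" "cn \<le> \<bar>C\<bar>"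
    unfolding cp_def cn_def by auto
  have PD: "0 \<le> dp" "0 \<le> dn" "D \<le> dp" "- dn \<le> D" "dp \<le> \<bar>D\<bar>" "dn \<le> \<bar>D\<bar>"
    unfolding dp_def dn_def by auto
  have PE: "0 \<le> ep" "0 \<le> en" "E \<le> ep" "- en \<le> E" "ep \<le> \<bar>E\<bar>" "en \<le> \<bar>E\<bar>"
    unfolding ep_def en_def by auto
  have MA: "\<bar>A\<bar> \<le> M" "\<bar>B\<bar> \<le> M" "\<bar>C\<bar> \<le> M" "\<bar>D\<bar> \<le> M" "\<bar>E\<bar> \<le> M" "\<bar>K\<bar> \<le> M" "0 \<le> \<bar>K\<bar>"
    unfolding M_def by auto
  have "ap \<le> M" using PA MA by linarith
  have "an \<le> M" using PA MA by linarith
  have "bp \<le> M" using PB MA by linarith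
  have "bn \<le> M" using PB MA by linarith
  have "cp \<le> M" using PC MA by linarith
  have "cn \<le> M" using PC MA by linarith
  have "dp \<le> M" using PD MA by linarith
  have "dn \<le> M" using PD MA by linarith
  have "ep \<le> M" using PE MA by linarith
  have "en \<le> M" using PE MA by linarith
  note FF = PA PB PC PD PE MA \<open>ap \<le> M\<close> \<open>an \<le> M\<close> \<open>bp \<le> M\<close> \<open>bn \<le> M\<close> \<open>cp \<le> M\<close> \<open>cn \<le> M\<close> \<open>dp \<le> M\<close> \<open>dn \<le> M\<close> \<open>ep \<le> M\<close> \<open>en \<le> M\<close>
  have M0: "0 \<le> M" using MA(6,7) by linarith
  have ph1: "\<And>oa ob oc od oe. 0 \<le> oa \<Longrightarrow> oa \<le> ap \<Longrightarrow> 0 \<le> ob \<Longrightarrow> ob \<le> bp \<Longrightarrow> 0 \<le> oc \<Longrightarrow> oc \<le> cp \<Longrightarrow> - dn \<le> od \<Longrightarrow> od \<le> 0 \<Longrightarrow> - en \<le> oe \<Longrightarrow> oe \<le> 0 \<Longrightarrow> goodc 0 oa ob oc od oe"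
  proof -
    fix oa ob oc od oe
    assume h: "0 \<le> oa" "oa \<le> ap" "0 \<le> ob" "ob \<le> bp" "0 \<le> oc" "oc \<le> cp" "- dn \<le> od" "od \<le> 0" "- en \<le> oe" "oe \<le> 0"
    show "goodc 0 oa ob oc od oe"
    proof (rule goodcI1)
      show "- M \<le> 0" using M0 by linarith
      show "0 \<le> M" using M0 by linarith
      show "- M \<le> oa" using h(1) M0 by linarith
      show "oa \<le> M" using h(2) \<open>ap \<le> M\<close> by linarith
      show "- M \<le> ob" using h(3) M0 by linarith
      show "ob \<le> M" using h(4) \<open>bp \<le> M\<close> by linarith
      show "- M \<le> oc" using h(5) M0 by linarith
      show "oc \<le> M" using h(6) \<open>cp \<le> M\<close> by linarith
      show "- M \<le> od" using h(7) \<open>dn \<le> M\<close> by linarith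
      show "od \<le> M" using h(8) M0 by linarith
      show "- M \<le> oe" using h(9) \<open>en \<le> M\<close> by linarith
      show "oe \<le> M" using h(10) M0 by linarith
      show "0 \<le> oa + ob - od - oe" using h(1,3,8,10) by linarith
      show "0 \<le> oa + oc - od - oe" using h(1,5,8,10) by linarith
      show "0 \<le> ob + oc - od - oe" using h(3,5,8,10) by linarith
    qed
  qed
  have ph2: "\<And>ok oa ob oc od oe. - \<bar>K\<bar> \<le> ok \<Longrightarrow> ok \<le> \<bar>K\<bar> \<Longrightarrow> A \<le> oa \<Longrightarrow> oa \<le> ap \<Longrightarrow> B \<le> ob \<Longrightarrow> ob \<le> bp \<Longrightarrow> C \<le> oc \<Longrightarrow> oc \<le> cp \<Longrightarrow> - dn \<le> od \<Longrightarrow> od \<le> D \<Longrightarrow> - en \<le> oe \<Longrightarrow> oe \<le> E \<Longrightarrow> goodc ok oa ob oc od oe"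
  proof -
    fix ok oa ob oc od oe
    assume h: "- \<bar>K\<bar> \<le> ok" "ok \<le> \<bar>K\<bar>" "A \<le> oa" "oa \<le> ap" "B \<le> ob" "ob \<le> bp" "C \<le> oc" "oc \<le> cp" "- dn \<le> od" "od \<le> D" "- en \<le> oe" "oe \<le> E"
    show "goodc ok oa ob oc od oe"
    proof (rule goodcI2)
      show "- M \<le> ok" using h(1) MA(6) by linarith
      show "ok \<le> M" using h(2) MA(6) by linarith
      show "- M \<le> oa" using h(3) PA(4) \<open>an \<le> M\<close> by linarith
      show "oa \<le> M" using h(4) \<open>ap \<le> M\<close> by linarith
      show "- M \<le> ob" using h(5) PB(4) \<open>bn \<le> M\<close> by linarith
      show "ob \<le> M" using h(6) \<open>bp \<le> M\<close> by linarith
      show "- M \<le> oc" using h(7) PC(4) \<open>cn \<le> M\<close> by linarith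
      show "oc \<le> M" using h(8) \<open>cp \<le> M\<close> by linarith
      show "- M \<le> od" using h(9) \<open>dn \<le> M\<close> by linarith
      show "od \<le> M" using h(10) PD(3) \<open>dp \<le> M\<close> by linarith
      show "- M \<le> oe" using h(11) \<open>en \<le> M\<close> by linarith
      show "oe \<le> M" using h(12) PE(3) \<open>ep \<le> M\<close> by linarith
      show "A + B - D - E \<le> oa + ob - od - oe" using h(3,5,10,12) by linarith
      show "A + C - D - E \<le> oa + oc - od - oe" using h(3,7,10,12) by linarith
      show "B + C - D - E \<le> ob + oc - od - oe" using h(5,7,10,12) by linarith
    qed
  qed
  have s1: "\<exists>g. sim g Bs \<and> (\<forall>n k. VV 0 ap 0 0 0 0 n k - VV 0 0 0 0 0 0 n k = g n (k + 1) - g n k)"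
  proof (rule segA)
    fix j assume hj: "min 0 ap \<le> j" "j \<le> max 0 ap"
    have hj2: "0 \<le> j" "j \<le> ap" by (rule mm1[OF hj(1)], simp add: PA PB PC PD PE) (rule MM1[OF hj(2)], simp add: PA PB PC PD PE)
    show "goodc 0 j 0 0 0 0" by (rule ph1) (simp_all add: hj2 PA PB PC PD PE)
  qed
  then obtain g1 where g1: "sim g1 Bs" "\<forall>n k. VV 0 ap 0 0 0 0 n k - VV 0 0 0 0 0 0 n k = g1 n (k + 1) - g1 n k" by blast
  have s2: "\<exists>g. sim g Bs \<and> (\<forall>n k. VV 0 ap bp 0 0 0 n k - VV 0 ap 0 0 0 0 n k = g n (k + 1) - g n k)"
  proof (rule segB)
    fix j assume hj: "min 0 bp \<le> j" "j \<le> max 0 bp"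
    have hj2: "0 \<le> j" "j \<le> bp" by (rule mm1[OF hj(1)], simp add: PA PB PC PD PE) (rule MM1[OF hj(2)], simp add: PA PB PC PD PE)
    show "goodc 0 ap j 0 0 0" by (rule ph1) (simp_all add: hj2 PA PB PC PD PE)
  qed
  then obtain g2 where g2: "sim g2 Bs" "\<forall>n k. VV 0 ap bp 0 0 0 n k - VV 0 ap 0 0 0 0 n k = g2 n (k + 1) - g2 n k" by blast
  have s3: "\<exists>g. sim g Bs \<and> (\<forall>n k. VV 0 ap bp cp 0 0 n k - VV 0 ap bp 0 0 0 n k = g n (k + 1) - g n k)"
  proof (rule segC)
    fix j assume hj: "min 0 cp \<le> j" "j \<le> max 0 cp"
    have hj2: "0 \<le> j" "j \<le> cp" by (rule mm1[OF hj(1)], simp add: PA PB PC PD PE) (rule MM1[OF hj(2)], simp add: PA PB PC PD PE)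
    show "goodc 0 ap bp j 0 0" by (rule ph1) (simp_all add: hj2 PA PB PC PD PE)
  qed
  then obtain g3 where g3: "sim g3 Bs" "\<forall>n k. VV 0 ap bp cp 0 0 n k - VV 0 ap bp 0 0 0 n k = g3 n (k + 1) - g3 n k" by blast
  have s4: "\<exists>g. sim g Bs \<and> (\<forall>n k. VV 0 ap bp cp (- dn) 0 n k - VV 0 ap bp cp 0 0 n k = g n (k + 1) - g n k)"
  proof (rule segD)
    fix j assume hj: "min 0 (- dn) \<le> j" "j \<le> max 0 (- dn)"
    have hj2: "(- dn) \<le> j" "j \<le> 0" by (rule mm2[OF hj(1)], simp add: PA PB PC PD PE) (rule MM2[OF hj(2)], simp add: PA PB PC PD PE)
    show "goodc 0 ap bp cp j 0" by (rule ph1) (simp_all add: hj2 PA PB PC PD PE)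
  qed
  then obtain g4 where g4: "sim g4 Bs" "\<forall>n k. VV 0 ap bp cp (- dn) 0 n k - VV 0 ap bp cp 0 0 n k = g4 n (k + 1) - g4 n k" by blast
  have s5: "\<exists>g. sim g Bs \<and> (\<forall>n k. VV 0 ap bp cp (- dn) (- en) n k - VV 0 ap bp cp (- dn) 0 n k = g n (k + 1) - g n k)"
  proof (rule segE)
    fix j assume hj: "min 0 (- en) \<le> j" "j \<le> max 0 (- en)"
    have hj2: "(- en) \<le> j" "j \<le> 0" by (rule mm2[OF hj(1)], simp add: PA PB PC PD PE) (rule MM2[OF hj(2)], simp add: PA PB PC PD PE)
    show "goodc 0 ap bp cp (- dn) j" by (rule ph1) (simp_all add: hj2 PA PB PC PD PE)
  qed
  then obtain g5 where g5: "sim g5 Bs" "\<forall>n k. VV 0 ap bp cp (- dn) (- en) n k - VV 0 ap bp cp (- dn) 0 n k = g5 n (k + 1) - g5 n k" by blast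
  have s6: "\<exists>g. sim g Bs \<and> (\<forall>n k. VV 0 A bp cp (- dn) (- en) n k - VV 0 ap bp cp (- dn) (- en) n k = g n (k + 1) - g n k)"
  proof (rule segA)
    fix j assume hj: "min ap A \<le> j" "j \<le> max ap A"
    have hj2: "A \<le> j" "j \<le> ap" by (rule mm2[OF hj(1)], simp add: PA PB PC PD PE) (rule MM2[OF hj(2)], simp add: PA PB PC PD PE)
    show "goodc 0 j bp cp (- dn) (- en)" by (rule ph2) (simp_all add: hj2 PA PB PC PD PE)
  qed
  then obtain g6 where g6: "sim g6 Bs" "\<forall>n k. VV 0 A bp cp (- dn) (- en) n k - VV 0 ap bp cp (- dn) (- en) n k = g6 n (k + 1) - g6 n k" by blast
  have s7: "\<exists>g. sim g Bs \<and> (\<forall>n k. VV 0 A B cp (- dn) (- en) n k - VV 0 A bp cp (- dn) (- en) n k = g n (k + 1) - g n k)"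
  proof (rule segB)
    fix j assume hj: "min bp B \<le> j" "j \<le> max bp B"
    have hj2: "B \<le> j" "j \<le> bp" by (rule mm2[OF hj(1)], simp add: PA PB PC PD PE) (rule MM2[OF hj(2)], simp add: PA PB PC PD PE)
    show "goodc 0 A j cp (- dn) (- en)" by (rule ph2) (simp_all add: hj2 PA PB PC PD PE)
  qed
  then obtain g7 where g7: "sim g7 Bs" "\<forall>n k. VV 0 A B cp (- dn) (- en) n k - VV 0 A bp cp (- dn) (- en) n k = g7 n (k + 1) - g7 n k" by blast
  have s8: "\<exists>g. sim g Bs \<and> (\<forall>n k. VV 0 A B C (- dn) (- en) n k - VV 0 A B cp (- dn) (- en) n k = g n (k + 1) - g n k)"
  proof (rule segC)
    fix j assume hj: "min cp C \<le> j" "j \<le> max cp C"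
    have hj2: "C \<le> j" "j \<le> cp" by (rule mm2[OF hj(1)], simp add: PA PB PC PD PE) (rule MM2[OF hj(2)], simp add: PA PB PC PD PE)
    show "goodc 0 A B j (- dn) (- en)" by (rule ph2) (simp_all add: hj2 PA PB PC PD PE)
  qed
  then obtain g8 where g8: "sim g8 Bs" "\<forall>n k. VV 0 A B C (- dn) (- en) n k - VV 0 A B cp (- dn) (- en) n k = g8 n (k + 1) - g8 n k" by blast
  have s9: "\<exists>g. sim g Bs \<and> (\<forall>n k. VV 0 A B C D (- en) n k - VV 0 A B C (- dn) (- en) n k = g n (k + 1) - g n k)"
  proof (rule segD)
    fix j assume hj: "min (- dn) D \<le> j" "j \<le> max (- dn) D"
    have hj2: "(- dn) \<le> j" "j \<le> D" by (rule mm1[OF hj(1)], simp add: PA PB PC PD PE) (rule MM1[OF hj(2)], simp add: PA PB PC PD PE)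
    show "goodc 0 A B C j (- en)" by (rule ph2) (simp_all add: hj2 PA PB PC PD PE)
  qed
  then obtain g9 where g9: "sim g9 Bs" "\<forall>n k. VV 0 A B C D (- en) n k - VV 0 A B C (- dn) (- en) n k = g9 n (k + 1) - g9 n k" by blast
  have s10: "\<exists>g. sim g Bs \<and> (\<forall>n k. VV 0 A B C D E n k - VV 0 A B C D (- en) n k = g n (k + 1) - g n k)"
  proof (rule segE)
    fix j assume hj: "min (- en) E \<le> j" "j \<le> max (- en) E"
    have hj2: "(- en) \<le> j" "j \<le> E" by (rule mm1[OF hj(1)], simp add: PA PB PC PD PE) (rule MM1[OF hj(2)], simp add: PA PB PC PD PE)
    show "goodc 0 A B C D j" by (rule ph2) (simp_all add: hj2 PA PB PC PD PE)
  qed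
  then obtain g10 where g10: "sim g10 Bs" "\<forall>n k. VV 0 A B C D E n k - VV 0 A B C D (- en) n k = g10 n (k + 1) - g10 n k" by blast
  have s11: "\<exists>g. sim g Bs \<and> (\<forall>n k. VV K A B C D E n k - VV 0 A B C D E n k = g n (k + 1) - g n k)"
  proof (rule segK)
    fix j assume hj: "min 0 K \<le> j" "j \<le> max 0 K"
    have hj2: "- \<bar>K\<bar> \<le> j" "j \<le> \<bar>K\<bar>" using mK[OF hj(1)] MK[OF hj(2)] by simp_all
    show "goodc j A B C D E" by (rule ph2) (simp_all add: hj2 PA PB PC PD PE)
  qed
  then obtain g11 where g11: "sim g11 Bs" "\<forall>n k. VV K A B C D E n k - VV 0 A B C D E n k = g11 n (k + 1) - g11 n k" by blast
  define G where "G = (\<lambda>n k. g1 n k + g2 n k + g3 n k + g4 n k + g5 n k + g6 n k + g7 n k + g8 n k + g9 n k + g10 n k + g11 n k)"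
  have simG: "sim G Bs" unfolding G_def by (intro sim_add g1(1) g2(1) g3(1) g4(1) g5(1) g6(1) g7(1) g8(1) g9(1) g10(1) g11(1))
  have eqG: "\<forall>n k. VV K A B C D E n k - VV 0 0 0 0 0 0 n k = G n (k + 1) - G n k"
  proof (intro allI)
    fix n k
    have "VV K A B C D E n k - VV 0 0 0 0 0 0 n k = (VV K A B C D E n k - VV 0 A B C D E n k) + (VV 0 A B C D E n k - VV 0 A B C D (- en) n k) + (VV 0 A B C D (- en) n k - VV 0 A B C (- dn) (- en) n k) + (VV 0 A B C (- dn) (- en) n k - VV 0 A B cp (- dn) (- en) n k) + (VV 0 A B cp (- dn) (- en) n k - VV 0 A bp cp (- dn) (- en) n k) + (VV 0 A bp cp (- dn) (- en) n k - VV 0 ap bp cp (- dn) (- en) n k) + (VV 0 ap bp cp (- dn) (- en) n k - VV 0 ap bp cp (- dn) 0 n k) + (VV 0 ap bp cp (- dn) 0 n k - VV 0 ap bp cp 0 0 n k) + (VV 0 ap bp cp 0 0 n k - VV 0 ap bp 0 0 0 n k) + (VV 0 ap bp 0 0 0 n k - VV 0 ap 0 0 0 0 n k) + (VV 0 ap 0 0 0 0 n k - VV 0 0 0 0 0 0 n k)" by (rule tele11)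
    also have "\<dots> = (g11 n (k + 1) - g11 n k) + (g10 n (k + 1) - g10 n k) + (g9 n (k + 1) - g9 n k) + (g8 n (k + 1) - g8 n k) + (g7 n (k + 1) - g7 n k) + (g6 n (k + 1) - g6 n k) + (g5 n (k + 1) - g5 n k) + (g4 n (k + 1) - g4 n k) + (g3 n (k + 1) - g3 n k) + (g2 n (k + 1) - g2 n k) + (g1 n (k + 1) - g1 n k)" unfolding g1(2)[rule_format] g2(2)[rule_format] g3(2)[rule_format] g4(2)[rule_format] g5(2)[rule_format] g6(2)[rule_format] g7(2)[rule_format] g8(2)[rule_format] g9(2)[rule_format] g10(2)[rule_format] g11(2)[rule_format] ..
    also have "\<dots> = G n (k + 1) - G n k" unfolding G_def by (rule sum11)
    finally show "VV K A B C D E n k - VV 0 0 0 0 0 0 n k = G n (k + 1) - G n k" .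
  qed
  have "hypergeometric2 G" by (rule hyp2I[OF hypN_sim[OF hypN_Bs simG] hypK_sim[OF hypK_Bs simG]])
  then show ?thesis using eqG by blast
qed

end

theorem theorem1:
  shows "wz_seed5 seedF0"
  unfolding wz_seed5_def Let_def
proof (intro allI impI)
  fix K A B C D E :: int and k0 a b c d e :: complex
  assume h: "\<forall>n k. seedF0 (of_int K * of_int n + k0 + of_int k) (of_int A * of_int n + a)
    (of_int B * of_int n + b) (of_int C * of_int n + c) (of_int D * of_int n + d) (of_int E * of_int n + e) \<noteq> None"
  have hon: "hon (of_int K * of_int n + k0 + of_int k) (of_int A * of_int n + a)
    (of_int B * of_int n + b) (of_int C * of_int n + c) (of_int D * of_int n + d) (of_int E * of_int n + e)" for n k
    using h[rule_format, of n k] unfolding seedF0_eq by (auto split: if_splits)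
  interpret W: wz K A B C D E k0 a b c d e by unfold_locales (rule hon)
  obtain G where G: "hypergeometric2 G"
    "\<forall>n k. W.VV K A B C D E n k - W.VV 0 0 0 0 0 0 n k = G n (k + 1) - G n k"
    using W.main by blast
  have e0: "the (seedF0 (of_int K * of_int n + k0 + of_int k) (of_int A * of_int n + a)
    (of_int B * of_int n + b) (of_int C * of_int n + c) (of_int D * of_int n + d) (of_int E * of_int n + e))
    = W.VV 0 0 0 0 0 0 n k" for n k
    unfolding seedF0_eq using hon[of n k]
    by (simp add: W.VV_def W.xk_def W.xa_def W.xb_def W.xc_def W.xd_def W.xe_def)
  have e1: "the (seedF0 (of_int K * of_int (n + 1) + k0 + of_int k) (of_int A * of_int (n + 1) + a)
    (of_int B * of_int (n + 1) + b) (of_int C * of_int (n + 1) + c) (of_int D * of_int (n + 1) + d)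
    (of_int E * of_int (n + 1) + e))
    = W.VV K A B C D E n k" for n k
  proof -
    have "the (seedF0 (of_int K * of_int (n + 1) + k0 + of_int k) (of_int A * of_int (n + 1) + a)
      (of_int B * of_int (n + 1) + b) (of_int C * of_int (n + 1) + c) (of_int D * of_int (n + 1) + d)
      (of_int E * of_int (n + 1) + e)) = Vv (of_int K * of_int (n + 1) + k0 + of_int k) (of_int A * of_int (n + 1) + a)
      (of_int B * of_int (n + 1) + b) (of_int C * of_int (n + 1) + c) (of_int D * of_int (n + 1) + d)
      (of_int E * of_int (n + 1) + e)"
      unfolding seedF0_eq using hon[of "n + 1" k] by simp
    also have "\<dots> = W.VV K A B C D E n k"
      unfolding W.VV_def W.xk_def W.xa_def W.xb_def W.xc_def W.xd_def W.xe_def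
      by (simp add: algebra_simps)
    finally show ?thesis .
  qed
  show "\<exists>G. wz_mate (\<lambda>n k. the (seedF0 (of_int K * of_int n + k0 + of_int k) (of_int A * of_int n + a)
    (of_int B * of_int n + b) (of_int C * of_int n + c) (of_int D * of_int n + d) (of_int E * of_int n + e))) G"
    unfolding wz_mate_def by (intro exI[of _ G], simp only: e1, simp only: e0, use G in blast)
qed

end
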